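(* Let $\mathscr H_1,\mathscr H_2$ be complex Hilbert spaces, $B\in\mathbb B(\mathscr H_2,\mathscr H_1)$, $C\in\mathbb B(\mathscr H_1,\mathscr H_2)$, and let $T=\begin{bmatrix}0&B\\ C&0\end{bmatrix}$ acting on $\mathscr H_1\oplus\mathscr H_2$. Then for any $r\ge1$ and $0\le\alpha\le1$, $$w^{2r}(T)\le \frac12\max\left\{\left\||C|^{4r\alpha}+|B^*|^{4r(1-\alpha)}\right\|,\ \left\||B|^{4r\alpha}+|C^*|^{4r(1-\alpha)}\right\|\right\}.$$
   Context: For a bounded operator $S$ on a complex Hilbert space, $w(S)=\sup\{|\langle Sx,x\rangle|:\|x\|=1\}$ is the numerical radius, $|S|=(S^*S)^{1/2}$, and $\|\cdot\|$ is the operator norm. *)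

theory Defs
  imports "HOL-Analysis.Analysis" "HOL-Computational_Algebra.Polynomial"
begin

class complex_vector = real_vector +
  fixes scaleC :: "complex \<Rightarrow> 'a \<Rightarrow> 'a"  (infixr \<open>*\<^sub>C\<close> 75)
  assumes scaleC_add_right: "a *\<^sub>C (x + y) = a *\<^sub>C x + a *\<^sub>C y"
    and scaleC_add_left: "(a + b) *\<^sub>C x = a *\<^sub>C x + b *\<^sub>C x"
    and scaleC_scaleC: "a *\<^sub>C (b *\<^sub>C x) = (a * b) *\<^sub>C x"
    and scaleC_one: "1 *\<^sub>C x = x"
    and scaleR_scaleC: "scaleR r = scaleC (complex_of_real r)"

class complex_normed_vector = complex_vector + real_normed_vector +
  assumes norm_scaleC: "norm (a *\<^sub>C x) = cmod a * norm x"

class complex_inner = complex_normed_vector +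
  fixes cinner :: "'a \<Rightarrow> 'a \<Rightarrow> complex"
  assumes cinner_commute: "cinner x y = cnj (cinner y x)"
    and cinner_add_left: "cinner (x + y) z = cinner x z + cinner y z"
    and cinner_scaleC_left: "cinner (a *\<^sub>C x) y = cnj a * cinner x y"
    and cinner_self_real: "Im (cinner x x) = 0"
    and cinner_self_nonneg: "0 \<le> Re (cinner x x)"
    and cinner_self_eq_zero: "cinner x x = 0 \<longleftrightarrow> x = 0"
    and norm_eq_sqrt_cinner: "norm x = sqrt (Re (cinner x x))"

class chilbert_space = complex_inner + complete_space

instantiation prod :: (complex_vector, complex_vector) complex_vector
begin
definition scaleC_prod_def: "a *\<^sub>C x = (a *\<^sub>C fst x, a *\<^sub>C snd x)"
instance
proof
  fix a b :: complex and x y :: "'a \<times> 'b" and r :: real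
  show "a *\<^sub>C (x + y) = a *\<^sub>C x + a *\<^sub>C y"
    by (simp add: scaleC_prod_def scaleC_add_right)
  show "(a + b) *\<^sub>C x = a *\<^sub>C x + b *\<^sub>C x"
    by (simp add: scaleC_prod_def scaleC_add_left)
  show "a *\<^sub>C b *\<^sub>C x = (a * b) *\<^sub>C x"
    by (simp add: scaleC_prod_def scaleC_scaleC)
  show "1 *\<^sub>C x = x"
    by (simp add: scaleC_prod_def scaleC_one)
  show "(scaleR r :: 'a \<times> 'b \<Rightarrow> _) = scaleC (complex_of_real r)"
    apply (rule ext)
    apply (simp add: scaleC_prod_def prod_eq_iff scaleR_scaleC)
    done
qed
end

instance prod :: (complex_normed_vector, complex_normed_vector) complex_normed_vector
proof
  fix a :: complex and x :: "'a \<times> 'b"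
  have "norm (a *\<^sub>C x) = sqrt ((cmod a)\<^sup>2 * ((norm (fst x))\<^sup>2 + (norm (snd x))\<^sup>2))"
    by (simp add: scaleC_prod_def norm_prod_def norm_scaleC power_mult_distrib algebra_simps)
  also have "\<dots> = cmod a * norm x"
    by (simp add: real_sqrt_mult norm_prod_def)
  finally show "norm (a *\<^sub>C x) = cmod a * norm x" .
qed

instantiation prod :: (complex_inner, complex_inner) complex_inner
begin
definition cinner_prod_def: "cinner x y = cinner (fst x) (fst y) + cinner (snd x) (snd y)"
instance
proof
  fix a :: complex and x y z :: "'a \<times> 'b"
  show "cinner x y = cnj (cinner y x)"
    by (simp add: cinner_prod_def cinner_commute[of "fst x"] cinner_commute[of "snd x"])
  show "cinner (x + y) z = cinner x z + cinner y z"
    by (simp add: cinner_prod_def cinner_add_left)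
  show "cinner (a *\<^sub>C x) y = cnj a * cinner x y"
    by (simp add: cinner_prod_def scaleC_prod_def cinner_scaleC_left algebra_simps)
  show "Im (cinner x x) = 0"
    by (simp add: cinner_prod_def cinner_self_real)
  show "0 \<le> Re (cinner x x)"
    by (simp add: cinner_prod_def cinner_self_nonneg)
  have n1: "(norm (fst x))\<^sup>2 = Re (cinner (fst x) (fst x))"
    by (simp add: norm_eq_sqrt_cinner cinner_self_nonneg)
  have n2: "(norm (snd x))\<^sup>2 = Re (cinner (snd x) (snd x))"
    by (simp add: norm_eq_sqrt_cinner cinner_self_nonneg)
  show "norm x = sqrt (Re (cinner x x))"
    by (simp add: norm_prod_def cinner_prod_def n1 n2)
  show "cinner x x = 0 \<longleftrightarrow> x = 0"
  proof
    assume h: "cinner x x = 0"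
    have "Re (cinner (fst x) (fst x)) + Re (cinner (snd x) (snd x)) = 0"
      using h by (simp add: cinner_prod_def complex_eq_iff)
    then have "Re (cinner (fst x) (fst x)) = 0" "Re (cinner (snd x) (snd x)) = 0"
      using cinner_self_nonneg[of "fst x"] cinner_self_nonneg[of "snd x"] by linarith+
    then have "cinner (fst x) (fst x) = 0" "cinner (snd x) (snd x) = 0"
      using cinner_self_real[of "fst x"] cinner_self_real[of "snd x"] by (simp_all add: complex_eq_iff)
    then show "x = 0" by (simp add: cinner_self_eq_zero prod_eq_iff)
  next
    assume "x = 0"
    then show "cinner x x = 0"
      using cinner_self_eq_zero[of "0::'a"] cinner_self_eq_zero[of "0::'b"]
      by (simp add: cinner_prod_def)
  qed
qed
end

instance prod :: (chilbert_space, chilbert_space) chilbert_space ..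

definition clinear :: "('a::complex_vector \<Rightarrow> 'b::complex_vector) \<Rightarrow> bool" where
  "clinear f \<longleftrightarrow> (\<forall>x y. f (x + y) = f x + f y) \<and> (\<forall>a x. f (a *\<^sub>C x) = a *\<^sub>C f x)"

definition bounded_clinear :: "('a::complex_normed_vector \<Rightarrow> 'b::complex_normed_vector) \<Rightarrow> bool" where
  "bounded_clinear f \<longleftrightarrow> clinear f \<and> (\<exists>K. \<forall>x. norm (f x) \<le> norm x * K)"

text \<open>Adjoint (exists and is unique for bounded operators between Hilbert spaces).\<close>
definition adj :: "('a::complex_inner \<Rightarrow> 'b::complex_inner) \<Rightarrow> 'b \<Rightarrow> 'a" where
  "adj S = (SOME S'. \<forall>x y. cinner (S x) y = cinner x (S' y))"

definition poly_op :: "real poly \<Rightarrow> ('a::complex_vector \<Rightarrow> 'a) \<Rightarrow> 'a \<Rightarrow> 'a" where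
  "poly_op p P v = (\<Sum>i\<le>degree p. complex_of_real (coeff p i) *\<^sub>C (P ^^ i) v)"

definition fpow :: "real \<Rightarrow> real \<Rightarrow> real" where
  "fpow t x = (if t = 0 then 1 else x powr t)"

text \<open>Continuous functional calculus: for a positive operator P (spectrum in [0, norm P]),
  P^t is the norm limit of p_n(P) for any polynomials p_n converging uniformly to x^t
  on [0, norm P].\<close>
definition op_pow :: "('a::chilbert_space \<Rightarrow> 'a) \<Rightarrow> real \<Rightarrow> 'a \<Rightarrow> 'a" where
  "op_pow P t = (THE Q. bounded_clinear Q \<and>
     (\<forall>ps :: nat \<Rightarrow> real poly.
        (\<forall>e>0. \<exists>N. \<forall>n\<ge>N. \<forall>x\<in>{0..onorm P}. \<bar>poly (ps n) x - fpow t x\<bar> < e) \<longrightarrow>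
        (\<lambda>n. onorm (\<lambda>v. poly_op (ps n) P v - Q v)) \<longlonglongrightarrow> 0))"

definition absop :: "('a::chilbert_space \<Rightarrow> 'b::chilbert_space) \<Rightarrow> 'a \<Rightarrow> 'a" where
  "absop S = op_pow (adj S \<circ> S) (1/2)"

text \<open>Numerical radius (the 0 only matters for the trivial space, where the sup is 0).\<close>
definition nrad :: "('a::complex_inner \<Rightarrow> 'a) \<Rightarrow> real" where
  "nrad S = Sup ({0} \<union> {cmod (cinner (S x) x) | x. norm x = 1})"

end

theory Submission
  imports Defs "HOL-Computational_Algebra.Fundamental_Theorem_Algebra"
begin


lemma scaleC_of_real: "complex_of_real r *\<^sub>C x = r *\<^sub>R x"
  by (simp add: scaleR_scaleC)

lemma scaleC_zero_left [simp]: "0 *\<^sub>C x = 0"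
  by (metis scaleC_of_real of_real_0 scaleR_zero_left)

lemma scaleC_zero_right [simp]: "a *\<^sub>C (0::'a::complex_vector) = 0"
proof -
  have "a *\<^sub>C (0::'a) + a *\<^sub>C 0 = a *\<^sub>C 0 + 0"
    by (metis add.right_neutral scaleC_add_right)
  then show ?thesis by simp
qed

lemma scaleC_minus_left: "(- a) *\<^sub>C x = - (a *\<^sub>C x)"
proof -
  have "a *\<^sub>C x + (- a) *\<^sub>C x = 0"
    by (metis scaleC_add_left add.right_inverse scaleC_zero_left)
  then show ?thesis by (simp add: eq_neg_iff_add_eq_0 add.commute)
qed

lemma scaleC_minus_right: "a *\<^sub>C (- x) = - (a *\<^sub>C x)"
proof -
  have "a *\<^sub>C x + a *\<^sub>C (- x) = 0"
    by (metis scaleC_add_right add.right_inverse scaleC_zero_right)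
  then show ?thesis by (simp add: eq_neg_iff_add_eq_0 add.commute)
qed

lemma scaleC_diff_left: "(a - b) *\<^sub>C x = a *\<^sub>C x - b *\<^sub>C x"
  by (metis diff_conv_add_uminus scaleC_add_left scaleC_minus_left)

lemma scaleC_diff_right: "a *\<^sub>C (x - y) = a *\<^sub>C x - a *\<^sub>C y"
  by (metis diff_conv_add_uminus scaleC_add_right scaleC_minus_right)

lemma scaleC_sum_right: "a *\<^sub>C (\<Sum>i\<in>I. f i) = (\<Sum>i\<in>I. a *\<^sub>C f i)"
  by (induct I rule: infinite_finite_induct) (auto simp: scaleC_add_right)

lemma scaleC_sum_left: "(\<Sum>i\<in>I. f i) *\<^sub>C x = (\<Sum>i\<in>I. f i *\<^sub>C x)"
  by (induct I rule: infinite_finite_induct) (auto simp: scaleC_add_left)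

lemma scaleC_one' [simp]: "1 *\<^sub>C x = x" by (rule scaleC_one)

lemma scaleC_scaleC' [simp]: "a *\<^sub>C (b *\<^sub>C x) = (a * b) *\<^sub>C x" by (rule scaleC_scaleC)

lemma scaleC_eq_0_iff: "a *\<^sub>C (x::'a::complex_normed_vector) = 0 \<longleftrightarrow> a = 0 \<or> x = 0"
proof -
  have "norm (a *\<^sub>C x) = cmod a * norm x" by (rule norm_scaleC)
  then show ?thesis by (metis mult_eq_0_iff norm_eq_zero norm_eq_zero[of a])
qed

lemma cinner_add_right: "cinner x (y + z) = cinner x y + cinner x z"
  by (metis cinner_commute cinner_add_left complex_cnj_add)

lemma cinner_scaleC_right: "cinner x (a *\<^sub>C y) = a * cinner x y"
  by (metis cinner_commute cinner_scaleC_left complex_cnj_mult complex_cnj_cnj)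

lemma cinner_zero_left [simp]: "cinner 0 y = 0"
  by (metis add_cancel_left_left add.right_neutral cinner_add_left)

lemma cinner_zero_right [simp]: "cinner x 0 = 0"
  by (metis cinner_commute cinner_zero_left complex_cnj_zero)

lemma cinner_minus_left: "cinner (- x) y = - cinner x y"
  by (metis add.right_inverse cinner_add_left cinner_zero_left eq_neg_iff_add_eq_0)

lemma cinner_minus_right: "cinner x (- y) = - cinner x y"
  by (metis add.right_inverse cinner_add_right cinner_zero_right eq_neg_iff_add_eq_0)

lemma cinner_diff_left: "cinner (x - y) z = cinner x z - cinner y z"
  by (metis diff_conv_add_uminus cinner_add_left cinner_minus_left)

lemma cinner_diff_right: "cinner x (y - z) = cinner x y - cinner x z"
  by (metis diff_conv_add_uminus cinner_add_right cinner_minus_right)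

lemma cinner_sum_left: "cinner (\<Sum>i\<in>I. f i) y = (\<Sum>i\<in>I. cinner (f i) y)"
  by (induct I rule: infinite_finite_induct) (auto simp: cinner_add_left)

lemma cinner_sum_right: "cinner x (\<Sum>i\<in>I. f i) = (\<Sum>i\<in>I. cinner x (f i))"
  by (induct I rule: infinite_finite_induct) (auto simp: cinner_add_right)

lemma cinner_scaleR_left: "cinner (r *\<^sub>R x) y = of_real r * cinner x y"
  by (metis cinner_scaleC_left complex_cnj_complex_of_real scaleC_of_real)

lemma cinner_scaleR_right: "cinner x (r *\<^sub>R y) = of_real r * cinner x y"
  by (metis cinner_scaleC_right scaleC_of_real)

lemma cinner_self: "cinner x x = complex_of_real ((norm x)\<^sup>2)"
  by (simp add: complex_eq_iff cinner_self_real norm_eq_sqrt_cinner cinner_self_nonneg)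

lemma Re_cinner_self: "Re (cinner x x) = (norm x)\<^sup>2"
  by (simp add: cinner_self)

lemma cinner_eq_zero_imp: "(\<And>z. cinner z x = cinner z y) \<Longrightarrow> x = y"
proof -
  assume h: "\<And>z. cinner z x = cinner z y"
  have "cinner (x - y) (x - y) = 0" using h by (simp add: cinner_diff_right)
  then show ?thesis by (simp add: cinner_self_eq_zero)
qed

lemma cauchy_schwarz: "cmod (cinner x y) \<le> norm x * norm y"
proof (cases "x = 0")
  case True then show ?thesis by simp
next
  case False
  define t where "t = cinner x y / complex_of_real ((norm x)\<^sup>2)"
  have nx: "norm x > 0" using False by simp
  have "0 \<le> Re (cinner (y - t *\<^sub>C x) (y - t *\<^sub>C x))" by (rule cinner_self_nonneg)
  also have "cinner (y - t *\<^sub>C x) (y - t *\<^sub>C x)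
      = cinner y y - t * cinner y x - cnj t * cinner x y + cnj t * t * cinner x x"
    by (simp add: cinner_diff_left cinner_diff_right cinner_scaleC_left cinner_scaleC_right algebra_simps)
  also have "\<dots> = cinner y y - cinner x y * cnj (cinner x y) / complex_of_real ((norm x)\<^sup>2)"
    using nx by (simp add: t_def cinner_self cinner_commute[of y x] field_simps power2_eq_square)
  also have "\<dots> = complex_of_real ((norm y)\<^sup>2 - (cmod (cinner x y))\<^sup>2 / (norm x)\<^sup>2)"
    by (simp add: cinner_self complex_norm_square[symmetric])
  finally have "0 \<le> (norm y)\<^sup>2 - (cmod (cinner x y))\<^sup>2 / (norm x)\<^sup>2"
    by simp
  then have "(cmod (cinner x y))\<^sup>2 \<le> (norm x * norm y)\<^sup>2"
    using nx by (simp add: field_simps power_mult_distrib)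
  then show ?thesis
    by (meson mult_nonneg_nonneg norm_ge_zero power2_le_imp_le)
qed



lemma bcl_linear: "bounded_clinear f \<Longrightarrow> f (x + y) = f x + f y"
  by (simp add: bounded_clinear_def clinear_def)
lemma bcl_scaleC: "bounded_clinear f \<Longrightarrow> f (a *\<^sub>C x) = a *\<^sub>C f x"
  by (simp add: bounded_clinear_def clinear_def)

lemma bcl_bounded_linear:
  assumes "bounded_clinear f" shows "bounded_linear f"
proof -
  obtain K where K: "\<forall>x. norm (f x) \<le> norm x * K" using assms by (auto simp: bounded_clinear_def)
  show ?thesis
  proof (unfold_locales)
    show "f (x + y) = f x + f y" for x y using assms by (rule bcl_linear)
    show "f (r *\<^sub>R x) = r *\<^sub>R f x" for r x
      using bcl_scaleC[OF assms, of "complex_of_real r" x] by (simp add: scaleC_of_real)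
    show "\<exists>K. \<forall>x. norm (f x) \<le> norm x * K" using K by blast
  qed
qed

lemma bcl_zero: "bounded_clinear f \<Longrightarrow> f 0 = 0"
  using bcl_bounded_linear linear_simps(3) bounded_linear.linear by blast
lemma bcl_minus: "bounded_clinear f \<Longrightarrow> f (- x) = - f x"
  by (metis bcl_bounded_linear bounded_linear.linear linear_simps(4))
lemma bcl_diff: "bounded_clinear f \<Longrightarrow> f (x - y) = f x - f y"
  by (metis bcl_bounded_linear bounded_linear.linear linear_simps(2))
lemma bcl_sum: "bounded_clinear f \<Longrightarrow> f (\<Sum>i\<in>I. g i) = (\<Sum>i\<in>I. f (g i))"
  by (metis bcl_bounded_linear bounded_linear.linear linear_sum)

lemma bcl_onorm: "bounded_clinear f \<Longrightarrow> norm (f x) \<le> onorm f * norm x"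
  by (rule onorm[OF bcl_bounded_linear])
lemma bcl_onorm_nonneg: "bounded_clinear f \<Longrightarrow> 0 \<le> onorm f"
  by (rule onorm_pos_le[OF bcl_bounded_linear])

lemma bcl_intro:
  assumes "\<And>x y. f (x + y) = f x + f y" "\<And>a x. f (a *\<^sub>C x) = a *\<^sub>C f x"
    "\<And>x. norm (f x) \<le> K * norm x"
  shows "bounded_clinear f"
  using assms unfolding bounded_clinear_def clinear_def by (metis mult.commute)

lemma bcl_id: "bounded_clinear (\<lambda>x. x)"
  by (rule bcl_intro[where K=1]) auto

lemma bcl_compose:
  assumes f: "bounded_clinear f" and g: "bounded_clinear g"
  shows "bounded_clinear (\<lambda>x. f (g x))"
proof (rule bcl_intro[where K="onorm f * onorm g"])
  show "f (g (x + y)) = f (g x) + f (g y)" for x y by (simp add: bcl_linear[OF f] bcl_linear[OF g])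
  show "f (g (a *\<^sub>C x)) = a *\<^sub>C f (g x)" for a x by (simp add: bcl_scaleC[OF f] bcl_scaleC[OF g])
  fix x
  have "norm (f (g x)) \<le> onorm f * norm (g x)" by (rule bcl_onorm[OF f])
  also have "\<dots> \<le> onorm f * (onorm g * norm x)"
    by (intro mult_left_mono bcl_onorm[OF g] bcl_onorm_nonneg[OF f])
  finally show "norm (f (g x)) \<le> onorm f * onorm g * norm x" by (simp add: mult.assoc)
qed

lemma bcl_add:
  assumes f: "bounded_clinear f" and g: "bounded_clinear g"
  shows "bounded_clinear (\<lambda>x. f x + g x)"
proof (rule bcl_intro[where K="onorm f + onorm g"])
  show "f (x + y) + g (x + y) = f x + g x + (f y + g y)" for x y
    by (simp add: bcl_linear[OF f] bcl_linear[OF g] algebra_simps)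
  show "f (a *\<^sub>C x) + g (a *\<^sub>C x) = a *\<^sub>C (f x + g x)" for a x
    by (simp add: bcl_scaleC[OF f] bcl_scaleC[OF g] scaleC_add_right)
  fix x
  have "norm (f x + g x) \<le> norm (f x) + norm (g x)" by (rule norm_triangle_ineq)
  also have "\<dots> \<le> onorm f * norm x + onorm g * norm x" by (intro add_mono bcl_onorm f g)
  finally show "norm (f x + g x) \<le> (onorm f + onorm g) * norm x" by (simp add: algebra_simps)
qed

lemma bcl_scale:
  assumes f: "bounded_clinear f"
  shows "bounded_clinear (\<lambda>x. c *\<^sub>C f x)"
proof (rule bcl_intro[where K="cmod c * onorm f"])
  show "c *\<^sub>C f (x + y) = c *\<^sub>C f x + c *\<^sub>C f y" for x y
    by (simp add: bcl_linear[OF f] scaleC_add_right)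
  show "c *\<^sub>C f (a *\<^sub>C x) = a *\<^sub>C c *\<^sub>C f x" for a x
    by (simp add: bcl_scaleC[OF f] mult.commute)
  show "norm (c *\<^sub>C f x) \<le> cmod c * onorm f * norm x" for x
    by (simp add: bcl_onorm[OF f] mult.assoc mult_left_mono norm_scaleC)
qed

lemma bcl_diff_op: "bounded_clinear f \<Longrightarrow> bounded_clinear g \<Longrightarrow> bounded_clinear (\<lambda>x. f x - g x)"
proof -
  assume f: "bounded_clinear f" and g: "bounded_clinear g"
  have "bounded_clinear (\<lambda>x. f x + (-1) *\<^sub>C g x)" by (intro bcl_add bcl_scale f g)
  then show ?thesis by (simp add: scaleC_minus_left)
qed

lemma bcl_sum_op: "(\<And>i. i \<in> I \<Longrightarrow> bounded_clinear (f i)) \<Longrightarrow> bounded_clinear (\<lambda>x. \<Sum>i\<in>I. f i x)"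
proof (induct I rule: infinite_finite_induct)
  case (infinite A) then show ?case by (simp add: bcl_intro[where K=0])
next
  case empty then show ?case by (simp add: bcl_intro[where K=0])
next
  case (insert i A) then show ?case by (simp add: bcl_add)
qed

lemma bcl_const_zero: "bounded_clinear (\<lambda>x. 0)"
  by (simp add: bcl_intro[where K=0])

section \<open>Riesz representation\<close>

lemma parallelogram: "(norm (x - y))\<^sup>2 + (norm (x + y))\<^sup>2 = 2 * (norm x)\<^sup>2 + 2 * (norm (y::'a::complex_inner))\<^sup>2"
proof -
  have "cinner (x - y) (x - y) + cinner (x + y) (x + y) = 2 * cinner x x + 2 * cinner y y"
    by (simp add: cinner_add_left cinner_add_right cinner_diff_left cinner_diff_right)
  then have "complex_of_real ((norm (x - y))\<^sup>2 + (norm (x + y))\<^sup>2) = complex_of_real (2 * (norm x)\<^sup>2 + 2 * (norm y)\<^sup>2)"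
    by (simp add: cinner_self)
  then show ?thesis using of_real_eq_iff by blast
qed

lemma norm_add_sq: "(norm (x + y))\<^sup>2 = (norm x)\<^sup>2 + 2 * Re (cinner x y) + (norm (y::'a::complex_inner))\<^sup>2"
proof -
  have "cinner (x + y) (x + y) = cinner x x + (cinner x y + cnj (cinner x y)) + cinner y y"
    by (simp add: cinner_add_left cinner_add_right cinner_commute[of y x])
  then have "Re (cinner (x + y) (x + y)) = Re (cinner x x) + 2 * Re (cinner x y) + Re (cinner y y)"
    by simp
  then show ?thesis by (simp add: Re_cinner_self)
qed

lemma riesz:
  fixes \<phi> :: "'a::chilbert_space \<Rightarrow> complex"
  assumes add: "\<And>x y. \<phi> (x + y) = \<phi> x + \<phi> y"
    and hom: "\<And>a x. \<phi> (a *\<^sub>C x) = a * \<phi> x"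
    and bnd: "\<And>x. cmod (\<phi> x) \<le> K * norm x"
  shows "\<exists>z. \<forall>x. \<phi> x = cinner z x"
proof (cases "\<forall>x. \<phi> x = 0")
  case True then show ?thesis by (intro exI[of _ 0]) simp
next
  case False
  then obtain x1 where x1: "\<phi> x1 \<noteq> 0" by blast
  have phi0: "\<phi> 0 = 0" using hom[of 0 0] by simp
  have phidiff: "\<phi> (x - y) = \<phi> x - \<phi> y" for x y
    using add[of "x - y" y] by simp
  define A where "A = {x. \<phi> x = 1}"
  have x1A: "(1 / \<phi> x1) *\<^sub>C x1 \<in> A" using x1 by (simp add: A_def hom)
  define d where "d = Inf (norm ` A)"
  have bddA: "bdd_below (norm ` A)" by (rule bdd_belowI[of _ 0]) auto
  have dle: "d \<le> norm x" if "x \<in> A" for x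
    unfolding d_def using that bddA by (simp add: cINF_lower)
  have d0: "0 \<le> d" unfolding d_def using x1A by (intro cINF_greatest) auto
  have "\<exists>x\<in>A. (norm x)\<^sup>2 < d\<^sup>2 + 1 / (Suc n)" for n
  proof -
    define Y where "Y = d\<^sup>2 + 1 / Suc n"
    have Y0: "0 \<le> Y" by (simp add: Y_def)
    have "d < sqrt Y" by (intro real_less_rsqrt) (simp add: Y_def)
    then have "Inf (norm ` A) < sqrt Y" by (simp add: d_def)
    then obtain u where "u \<in> norm ` A" "u < sqrt Y"
      using x1A cInf_lessD[of "norm ` A" "sqrt Y"] by blast
    then obtain x where xA: "x \<in> A" and "norm x < sqrt Y" by blast
    then have "(norm x)\<^sup>2 < (sqrt Y)\<^sup>2" by (intro power_strict_mono) auto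
    then have "(norm x)\<^sup>2 < Y" using Y0 by simp
    then show ?thesis using xA by (auto simp: Y_def)
  qed
  then obtain xs where xsA: "\<And>n. xs n \<in> A" and xsn: "\<And>n. (norm (xs n))\<^sup>2 < d\<^sup>2 + 1 / (Suc n)"
    by metis
  have mid: "(norm (xs n - xs m))\<^sup>2 \<le> 2 / Suc n + 2 / Suc m" for n m
  proof -
    have "(1/2) *\<^sub>C (xs n + xs m) \<in> A" using xsA[of n] xsA[of m]
      by (simp add: A_def hom add)
    then have "d \<le> norm ((1/2) *\<^sub>C (xs n + xs m))" by (rule dle)
    then have "d \<le> norm (xs n + xs m) / 2" by (simp add: norm_scaleC)
    then have "2 * d \<le> norm (xs n + xs m)" by simp
    then have "(2 * d)\<^sup>2 \<le> (norm (xs n + xs m))\<^sup>2"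
      by (rule power_mono) (use d0 in simp)
    then have "4 * d\<^sup>2 \<le> (norm (xs n + xs m))\<^sup>2" by (simp add: power_mult_distrib)
    then show ?thesis using parallelogram[of "xs n" "xs m"] xsn[of n] xsn[of m] by linarith
  qed
  have "Cauchy xs"
  proof (rule metric_CauchyI)
    fix e :: real assume e: "0 < e"
    obtain N :: nat where N: "4 / e\<^sup>2 < N" using reals_Archimedean2 by blast
    have Npos: "0 < real N" using N e by (smt (verit) divide_pos_pos zero_less_power)
    show "\<exists>M. \<forall>m\<ge>M. \<forall>n\<ge>M. dist (xs m) (xs n) < e"
    proof (intro exI allI impI)
      fix m n assume m: "N \<le> m" and n: "N \<le> n"
      have "2 / Suc m \<le> 2 / N" using m Npos by (intro divide_left_mono) auto
      moreover have "2 / Suc n \<le> 2 / N" using n Npos by (intro divide_left_mono) auto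
      moreover have "4 / N < e\<^sup>2" using N e Npos by (simp add: field_simps)
      ultimately have "(norm (xs m - xs n))\<^sup>2 < e\<^sup>2" using mid[of m n] by linarith
      then show "dist (xs m) (xs n) < e" using e
        by (simp add: dist_norm power2_less_imp_less)
    qed
  qed
  then obtain x0 where lim: "xs \<longlonglongrightarrow> x0" using convergent_eq_Cauchy by blast
  have phix0: "\<phi> x0 = 1"
  proof -
    have "cmod (1 - \<phi> x0) \<le> K * norm (xs n - x0)" for n
      using bnd[of "xs n - x0"] xsA[of n] by (simp add: phidiff A_def)
    moreover have "(\<lambda>n. K * norm (xs n - x0)) \<longlonglongrightarrow> 0"
      using lim by (metis Lim_null mult_zero_right tendsto_mult_left tendsto_norm_zero)
    ultimately have "cmod (1 - \<phi> x0) \<le> 0"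
      by (intro tendsto_le[OF trivial_limit_sequentially]) auto
    then show ?thesis by simp
  qed
  have x0min: "norm x0 \<le> norm y" if "y \<in> A" for y
  proof -
    have l1: "(\<lambda>n. (norm (xs n))\<^sup>2) \<longlonglongrightarrow> (norm x0)\<^sup>2"
      by (intro tendsto_intros lim)
    have l2: "(\<lambda>n. d\<^sup>2 + 1 / real (Suc n)) \<longlonglongrightarrow> d\<^sup>2 + 0"
      by (intro tendsto_intros) (rule LIMSEQ_Suc[OF lim_inverse_n'])
    have ev: "\<forall>n. (norm (xs n))\<^sup>2 \<le> d\<^sup>2 + 1 / real (Suc n)" using xsn less_imp_le by blast
    have "(norm x0)\<^sup>2 \<le> d\<^sup>2 + 0"
      by (rule tendsto_le[OF trivial_limit_sequentially l2 l1 always_eventually[OF ev]])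
    then have "norm x0 \<le> d" using d0 power2_le_imp_le[of "norm x0" d] by simp
    then show ?thesis using dle[OF that] by linarith
  qed
  have orth: "cinner x0 v = 0" if v: "\<phi> v = 0" for v
  proof (rule ccontr)
    assume c0: "cinner x0 v \<noteq> 0"
    define c where "c = cinner x0 v"
    define s where "s = 1 / ((norm v)\<^sup>2 + 1)"
    have vp: "0 < (norm v)\<^sup>2 + 1" using zero_le_power2[of "norm v"] by linarith
    have s0: "0 < s" using vp by (simp add: s_def)
    define t where "t = - complex_of_real s * cnj c"
    have "x0 + t *\<^sub>C v \<in> A" using phix0 v by (simp add: A_def add hom)
    then have "norm x0 \<le> norm (x0 + t *\<^sub>C v)" by (rule x0min)
    then have "(norm x0)\<^sup>2 \<le> (norm (x0 + t *\<^sub>C v))\<^sup>2" by (simp add: power_mono)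
    also have "\<dots> = (norm x0)\<^sup>2 + 2 * Re (cinner x0 (t *\<^sub>C v)) + (norm (t *\<^sub>C v))\<^sup>2"
      by (rule norm_add_sq)
    also have "Re (cinner x0 (t *\<^sub>C v)) = - s * (cmod c)\<^sup>2"
    proof -
      have cc: "cnj c * c = complex_of_real ((cmod c)\<^sup>2)"
        by (metis complex_norm_square mult.commute of_real_power)
      have "cinner x0 (t *\<^sub>C v) = - complex_of_real s * (cnj c * c)"
        by (simp add: cinner_scaleC_right t_def c_def[symmetric])
      also have "\<dots> = complex_of_real (- s * (cmod c)\<^sup>2)" by (simp add: cc)
      finally show ?thesis by simp
    qed
    also have "(norm (t *\<^sub>C v))\<^sup>2 = s\<^sup>2 * (cmod c)\<^sup>2 * (norm v)\<^sup>2"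
      using s0 by (simp add: norm_scaleC t_def norm_mult power_mult_distrib)
    finally have "2 * s * (cmod c)\<^sup>2 \<le> s\<^sup>2 * (cmod c)\<^sup>2 * (norm v)\<^sup>2" by simp
    then have "2 * (cmod c)\<^sup>2 \<le> s * (cmod c)\<^sup>2 * (norm v)\<^sup>2" using s0
      by (simp add: power2_eq_square mult.assoc mult_le_cancel_left_pos)
    moreover have "s * (norm v)\<^sup>2 < 1" unfolding s_def using vp by (simp add: field_simps)
    moreover have "0 < (cmod c)\<^sup>2" using c0 c_def by simp
    ultimately have "s * (cmod c)\<^sup>2 * (norm v)\<^sup>2 < (cmod c)\<^sup>2 * 1"
      by (metis mult.commute mult.left_commute mult_strict_left_mono)
    with \<open>2 * (cmod c)\<^sup>2 \<le> s * (cmod c)\<^sup>2 * (norm v)\<^sup>2\<close> \<open>0 < (cmod c)\<^sup>2\<close> show False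
      by linarith
  qed
  have x0nz: "x0 \<noteq> 0" using phix0 phi0 by auto
  have key: "cinner x0 x = \<phi> x * complex_of_real ((norm x0)\<^sup>2)" for x
  proof -
    have "\<phi> (x - \<phi> x *\<^sub>C x0) = 0" by (simp add: phidiff hom phix0)
    then have "cinner x0 (x - \<phi> x *\<^sub>C x0) = 0" by (rule orth)
    then show ?thesis by (simp add: cinner_diff_right cinner_scaleC_right cinner_self)
  qed
  show ?thesis
  proof (intro exI allI)
    fix x
    show "\<phi> x = cinner ((complex_of_real (1 / (norm x0)\<^sup>2)) *\<^sub>C x0) x"
      using x0nz by (simp add: cinner_scaleC_left key)
  qed
qed



lemma adj_exists:
  fixes S :: "'a::chilbert_space \<Rightarrow> 'b::chilbert_space"
  assumes S: "bounded_clinear S"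
  shows "\<exists>S'. \<forall>x y. cinner (S x) y = cinner x (S' y)"
proof -
  have "\<exists>z. \<forall>x. cinner (S x) y = cinner x z" for y
  proof -
    have "\<exists>z. \<forall>x. cinner y (S x) = cinner z x"
    proof (rule riesz[where K="norm y * onorm S"])
      show "cinner y (S (x1 + x2)) = cinner y (S x1) + cinner y (S x2)" for x1 x2
        by (simp add: bcl_linear[OF S] cinner_add_right)
      show "cinner y (S (a *\<^sub>C x)) = a * cinner y (S x)" for a x
        by (simp add: bcl_scaleC[OF S] cinner_scaleC_right)
      show "cmod (cinner y (S x)) \<le> norm y * onorm S * norm x" for x
      proof -
        have "cmod (cinner y (S x)) \<le> norm y * norm (S x)" by (rule cauchy_schwarz)
        also have "\<dots> \<le> norm y * (onorm S * norm x)" by (intro mult_left_mono bcl_onorm[OF S]) auto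
        finally show ?thesis by (simp add: mult.assoc)
      qed
    qed
    then obtain z where z: "\<forall>x. cinner y (S x) = cinner z x" by blast
    have "cinner (S x) y = cinner x z" for x
      by (metis cinner_commute z)
    then show ?thesis by blast
  qed
  then show ?thesis by metis
qed

lemma adj_prop:
  fixes S :: "'a::chilbert_space \<Rightarrow> 'b::chilbert_space"
  assumes "bounded_clinear S"
  shows "cinner (S x) y = cinner x (adj S y)"
proof -
  have "\<forall>x y. cinner (S x) y = cinner x (adj S y)"
    unfolding adj_def using someI_ex[OF adj_exists[OF assms]] .
  then show ?thesis by blast
qed

lemma adj_prop2:
  fixes S :: "'a::chilbert_space \<Rightarrow> 'b::chilbert_space"
  assumes "bounded_clinear S"
  shows "cinner (adj S y) x = cinner y (S x)"
  by (metis adj_prop assms cinner_commute)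

lemma adj_bcl:
  fixes S :: "'a::chilbert_space \<Rightarrow> 'b::chilbert_space"
  assumes S: "bounded_clinear S"
  shows "bounded_clinear (adj S)"
proof (rule bcl_intro[where K="onorm S"])
  show "adj S (x + y) = adj S x + adj S y" for x y
    by (rule cinner_eq_zero_imp) (simp add: adj_prop[OF S, symmetric] cinner_add_right)
  show "adj S (a *\<^sub>C x) = a *\<^sub>C adj S x" for a x
    by (rule cinner_eq_zero_imp) (simp add: adj_prop[OF S, symmetric] cinner_scaleC_right)
  fix y
  have "(norm (adj S y))\<^sup>2 = Re (cinner (S (adj S y)) y)"
    by (simp add: adj_prop[OF S] Re_cinner_self)
  also have "\<dots> \<le> cmod (cinner (S (adj S y)) y)" by (rule complex_Re_le_cmod)
  also have "\<dots> \<le> norm (S (adj S y)) * norm y" by (rule cauchy_schwarz)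
  also have "\<dots> \<le> onorm S * norm (adj S y) * norm y"
    by (intro mult_right_mono bcl_onorm[OF S]) auto
  finally have *: "norm (adj S y) * norm (adj S y) \<le> (onorm S * norm y) * norm (adj S y)"
    by (simp add: power2_eq_square algebra_simps)
  show "norm (adj S y) \<le> onorm S * norm y"
  proof (cases "norm (adj S y) = 0")
    case True then show ?thesis using bcl_onorm_nonneg[OF S] by simp
  next
    case False then show ?thesis using * by (simp add: mult_le_cancel_right)
  qed
qed

lemma adj_adj:
  fixes S :: "'a::chilbert_space \<Rightarrow> 'b::chilbert_space"
  assumes S: "bounded_clinear S"
  shows "adj (adj S) = S"
proof
  fix x
  show "adj (adj S) x = S x"
    by (rule cinner_eq_zero_imp) (simp add: adj_prop[OF adj_bcl[OF S], symmetric] adj_prop2[OF S])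
qed

definition posop :: "('a::complex_inner \<Rightarrow> 'a) \<Rightarrow> bool" where
  "posop P \<longleftrightarrow> bounded_clinear P \<and> (\<forall>x y. cinner (P x) y = cinner x (P y)) \<and> (\<forall>x. 0 \<le> Re (cinner (P x) x))"

lemma posop_bcl: "posop P \<Longrightarrow> bounded_clinear P" by (simp add: posop_def)
lemma posop_sa: "posop P \<Longrightarrow> cinner (P x) y = cinner x (P y)" by (simp add: posop_def)
lemma posop_nonneg: "posop P \<Longrightarrow> 0 \<le> Re (cinner (P x) x)" unfolding posop_def by blast

lemma sa_real: "cinner (P x) x = cinner x (P x) \<Longrightarrow> Im (cinner (P x) x) = 0"
  by (metis cinner_commute cnj.simps(2) neg_equal_zero)

lemma posop_AstarA:
  fixes S :: "'a::chilbert_space \<Rightarrow> 'b::chilbert_space"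
  assumes S: "bounded_clinear S"
  shows "posop (adj S \<circ> S)"
  unfolding posop_def
proof (intro conjI allI)
  show "bounded_clinear (adj S \<circ> S)"
    unfolding comp_def by (rule bcl_compose[OF adj_bcl[OF S] S])
  show "cinner ((adj S \<circ> S) x) y = cinner x ((adj S \<circ> S) y)" for x y
  proof -
    have "cinner ((adj S \<circ> S) x) y = cinner (S x) (S y)" unfolding comp_def by (rule adj_prop2[OF S])
    also have "\<dots> = cinner x ((adj S \<circ> S) y)" unfolding comp_def by (rule adj_prop[OF S])
    finally show ?thesis .
  qed
  show "0 \<le> Re (cinner ((adj S \<circ> S) x) x)" for x
    unfolding comp_def adj_prop2[OF S] by (rule cinner_self_nonneg)
qed

lemma poly_op_upto:
  assumes "degree p < N"
  shows "poly_op p P v = (\<Sum>i<N. complex_of_real (coeff p i) *\<^sub>C (P ^^ i) v)"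
  unfolding poly_op_def
proof (rule sum.mono_neutral_left)
  show "finite {..<N}" by simp
  show "{..degree p} \<subseteq> {..<N}" using assms by auto
  show "\<forall>i\<in>{..<N} - {..degree p}. complex_of_real (coeff p i) *\<^sub>C (P ^^ i) v = 0"
    by (auto simp: coeff_eq_0)
qed

lemma poly_op_pCons:
  assumes P: "bounded_clinear P"
  shows "poly_op (pCons a p) P v = complex_of_real a *\<^sub>C v + P (poly_op p P v)"
proof -
  define N where "N = Suc (degree p)"
  have d1: "degree (pCons a p) < Suc N" unfolding N_def
    by (metis degree_pCons_le le_imp_less_Suc)
  have d2: "degree p < N" by (simp add: N_def)
  have "poly_op (pCons a p) P v = (\<Sum>i<Suc N. complex_of_real (coeff (pCons a p) i) *\<^sub>C (P ^^ i) v)"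
    by (rule poly_op_upto[OF d1])
  also have "\<dots> = complex_of_real a *\<^sub>C v + (\<Sum>i<N. complex_of_real (coeff p i) *\<^sub>C (P ^^ Suc i) v)"
    by (simp only: sum.lessThan_Suc_shift) simp
  also have "(\<Sum>i<N. complex_of_real (coeff p i) *\<^sub>C (P ^^ Suc i) v) = P (poly_op p P v)"
    by (simp add: poly_op_upto[OF d2] bcl_sum[OF P] bcl_scaleC[OF P])
  finally show ?thesis .
qed

lemma poly_op_0 [simp]: "poly_op 0 P v = 0"
  by (simp add: poly_op_def)

lemma poly_op_const: "poly_op [:c:] P v = complex_of_real c *\<^sub>C v"
  by (simp add: poly_op_def)

lemma poly_op_add: "poly_op (p + q) P v = poly_op p P v + poly_op q P v"
proof -
  define N where "N = Suc (degree p + degree q)"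
  have "degree (p + q) < N" unfolding N_def
    by (metis degree_add_le le_imp_less_Suc add_le_mono le_add1 le_add2 max.bounded_iff order_trans)
  moreover have "degree p < N" "degree q < N" by (auto simp: N_def)
  ultimately show ?thesis
    by (simp add: poly_op_upto[of _ N] sum.distrib scaleC_add_left)
qed

lemma poly_op_smult: "poly_op (smult c p) P v = complex_of_real c *\<^sub>C poly_op p P v"
proof -
  define N where "N = Suc (degree p)"
  have "degree (smult c p) < N" "degree p < N" by (auto simp: N_def le_imp_less_Suc)
  then show ?thesis
    by (simp add: poly_op_upto[of _ N] scaleC_sum_right)
qed

lemma poly_op_minus: "poly_op (- p) P v = - poly_op p P v"
  by (metis poly_op_smult smult_minus_left smult_1_left of_real_1 of_real_minus scaleC_minus_left scaleC_one)

lemma poly_op_diff: "poly_op (p - q) P v = poly_op p P v - poly_op q P v"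
  by (metis diff_conv_add_uminus poly_op_add poly_op_minus)

lemma poly_op_x:
  assumes P: "bounded_clinear P"
  shows "poly_op [:0, 1:] P v = P v"
  by (simp add: poly_op_pCons[OF P] poly_op_const bcl_zero[OF P])

lemma poly_op_bcl:
  assumes P: "bounded_clinear P"
  shows "bounded_clinear (poly_op p P)"
proof (induct p)
  case 0 then show ?case by (simp add: bcl_const_zero)
next
  case (pCons a p)
  have "bounded_clinear (\<lambda>v. complex_of_real a *\<^sub>C v + P (poly_op p P v))"
    by (rule bcl_add[OF bcl_scale[OF bcl_id] bcl_compose[OF P pCons(2)]])
  then show ?case by (simp add: poly_op_pCons[OF P] fun_eq_iff)
qed

lemma poly_op_mult:
  assumes P: "bounded_clinear P"
  shows "poly_op (p * q) P v = poly_op p P (poly_op q P v)"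
proof (induct p arbitrary: v)
  case 0 then show ?case by simp
next
  case (pCons a p)
  have "pCons a p * q = smult a q + pCons 0 (p * q)" by simp
  then have "poly_op (pCons a p * q) P v = complex_of_real a *\<^sub>C poly_op q P v + P (poly_op (p * q) P v)"
    by (simp add: poly_op_add poly_op_smult poly_op_pCons[OF P])
  also have "\<dots> = poly_op (pCons a p) P (poly_op q P v)"
    by (simp add: poly_op_pCons[OF P] pCons(2))
  finally show ?case .
qed

lemma poly_op_commute:
  assumes P: "bounded_clinear P"
  shows "poly_op p P (poly_op q P v) = poly_op q P (poly_op p P v)"
  by (metis P mult.commute poly_op_mult)

lemma poly_op_commute_P:
  assumes P: "bounded_clinear P"
  shows "poly_op p P (P v) = P (poly_op p P v)"
  using poly_op_commute[OF P, of p "[:0,1:]" v] by (simp add: poly_op_x[OF P])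

lemma poly_op_sa:
  assumes P: "posop P"
  shows "cinner (poly_op p P x) y = cinner x (poly_op p P y)"
proof (induct p arbitrary: x y)
  case 0 then show ?case by simp
next
  case (pCons a p)
  have B: "bounded_clinear P" using P by (rule posop_bcl)
  have "cinner (poly_op (pCons a p) P x) y = complex_of_real a * cinner x y + cinner (poly_op p P x) (P y)"
    by (simp add: poly_op_pCons[OF B] cinner_add_left cinner_scaleC_left posop_sa[OF P])
  also have "\<dots> = complex_of_real a * cinner x y + cinner x (P (poly_op p P y))"
    by (simp add: pCons(2) poly_op_commute_P[OF B])
  also have "\<dots> = cinner x (poly_op (pCons a p) P y)"
    by (simp add: poly_op_pCons[OF B] cinner_add_right cinner_scaleC_right)
  finally show ?case .
qed



section \<open>Sums of squares and a positivity certificate on an interval\<close>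

inductive sos :: "real poly \<Rightarrow> bool" where
  sos_sq: "sos (s * s)"
| sos_add: "sos p \<Longrightarrow> sos q \<Longrightarrow> sos (p + q)"

lemma sos_0: "sos 0" using sos_sq[of 0] by simp

lemma sos_mult: "sos p \<Longrightarrow> sos q \<Longrightarrow> sos (p * q)"
proof (induct p rule: sos.induct)
  case (sos_sq s)
  from sos_sq show ?case
  proof (induct q rule: sos.induct)
    case (sos_sq t)
    have "s * s * (t * t) = (s * t) * (s * t)" by (simp add: algebra_simps)
    then show ?case using sos.sos_sq by metis
  next
    case (sos_add p q)
    then show ?case by (simp add: distrib_left sos.sos_add)
  qed
next
  case (sos_add p1 p2) then show ?case by (simp add: distrib_right sos.sos_add)
qed

lemma sos_smult: assumes c: "0 \<le> c" shows "sos p \<Longrightarrow> sos (smult c p)"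
proof (induct p rule: sos.induct)
  case (sos_sq s)
  have "smult c (s * s) = smult (sqrt c) s * smult (sqrt c) s"
    using c by (simp add: mult_smult_left mult_smult_right real_sqrt_mult_self)
  then show ?case by (metis sos.sos_sq)
next
  case (sos_add p q) then show ?case by (simp add: smult_add_right sos.sos_add)
qed

lemma sos_const: "0 \<le> c \<Longrightarrow> sos [:c:]"
proof -
  assume "0 \<le> c"
  have "sos (smult c (1 * 1))" by (rule sos_smult[OF \<open>0 \<le> c\<close> sos_sq])
  then show ?thesis by simp
qed

definition cone :: "real \<Rightarrow> real poly \<Rightarrow> bool" where
  "cone L p \<longleftrightarrow> (\<exists>a b c. sos a \<and> sos b \<and> sos c \<and> p = a + [:0,1:] * b + [:L,-1:] * c)"

lemma cone_sos: "sos a \<Longrightarrow> cone L a"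
  unfolding cone_def by (rule exI[of _ a], rule exI[of _ 0], rule exI[of _ 0]) (simp add: sos_0)

lemma cone_add: "cone L p \<Longrightarrow> cone L q \<Longrightarrow> cone L (p + q)"
  unfolding cone_def
proof (elim exE conjE)
  fix a b c a' b' c'
  assume "sos a" "sos b" "sos c" "p = a + [:0, 1:] * b + [:L, - 1:] * c"
    "sos a'" "sos b'" "sos c'" "q = a' + [:0, 1:] * b' + [:L, - 1:] * c'"
  note h = this
  have "p + q = (a + a') + [:0, 1:] * (b + b') + [:L, - 1:] * (c + c')"
    using h by (simp add: algebra_simps smult_add_right)
  with h show "\<exists>a b c. sos a \<and> sos b \<and> sos c \<and> p + q = a + [:0, 1:] * b + [:L, - 1:] * c"
    by (meson sos_add)
qed

lemma cone_mult_sos: "sos s \<Longrightarrow> cone L p \<Longrightarrow> cone L (s * p)"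
  unfolding cone_def
proof (elim exE conjE)
  fix a b c
  assume "sos s" "sos a" "sos b" "sos c" "p = a + [:0, 1:] * b + [:L, - 1:] * c"
  note h = this
  have "s * p = (s * a) + [:0, 1:] * (s * b) + [:L, - 1:] * (s * c)"
    using h by (simp add: algebra_simps)
  with h show "\<exists>a b c. sos a \<and> sos b \<and> sos c \<and> s * p = a + [:0, 1:] * b + [:L, - 1:] * c"
    by (meson sos_mult)
qed

lemma cone_smult: "0 \<le> c \<Longrightarrow> cone L p \<Longrightarrow> cone L (smult c p)"
  using cone_mult_sos[OF sos_const, of c L p] by simp

lemma poly_ext_eq:
  fixes p q :: "real poly"
  assumes h: "\<And>x. poly p x = poly q x" shows "p = q"
proof -
  have "poly p = poly q" by (rule ext) (rule h)
  then show ?thesis by (simp add: poly_eq_poly_eq_iff)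
qed

lemma idX: "L \<noteq> 0 \<Longrightarrow> (x::real) * (A + x * B + (L - x) * C) =
   x * x * B + x * (A + (1 / L) * ((L - x) * (L - x) * C)) + (L - x) * ((1 / L) * (x * x * C))"
proof -
  assume L: "L \<noteq> 0"
  have "x * x * B + x * (A + M * ((L - x) * (L - x) * C)) + (L - x) * (M * (x * x * C))
     = x * x * B + x * A + M * (L * (x * (L - x) * C))" for M :: real by algebra
  then have "x * x * B + x * (A + (1 / L) * ((L - x) * (L - x) * C)) + (L - x) * ((1 / L) * (x * x * C))
     = x * x * B + x * A + (1 / L) * (L * (x * (L - x) * C))" .
  also have "\<dots> = x * x * B + x * A + x * (L - x) * C" using L by simp
  finally show ?thesis by algebra
qed

lemma idLx: "L \<noteq> 0 \<Longrightarrow> (L - (x::real)) * (A + x * B + (L - x) * C) =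
   (L - x) * (L - x) * C + x * ((1 / L) * ((L - x) * (L - x) * B)) + (L - x) * (A + (1 / L) * (x * x * B))"
proof -
  assume L: "L \<noteq> 0"
  have "(L - x) * (L - x) * C + x * (M * ((L - x) * (L - x) * B)) + (L - x) * (A + M * (x * x * B))
     = (L - x) * (L - x) * C + (L - x) * A + M * (L * (x * (L - x) * B))" for M :: real by algebra
  then have "(L - x) * (L - x) * C + x * ((1 / L) * ((L - x) * (L - x) * B)) + (L - x) * (A + (1 / L) * (x * x * B))
     = (L - x) * (L - x) * C + (L - x) * A + (1 / L) * (L * (x * (L - x) * B))" .
  also have "\<dots> = (L - x) * (L - x) * C + (L - x) * A + x * (L - x) * B" using L by simp
  finally show ?thesis by algebra
qed

lemma cone_X:
  assumes L: "0 < L" and p: "cone L p"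
  shows "cone L ([:0,1:] * p)"
proof -
  obtain a b c where abc: "sos a" "sos b" "sos c" and pe: "p = a + [:0, 1:] * b + [:L, - 1:] * c"
    using p unfolding cone_def by blast
  have eq: "[:0,1:] * p = [:0,1:] * [:0,1:] * b + [:0,1:] * (a + smult (1/L) ([:L,-1:] * [:L,-1:] * c))
     + [:L,-1:] * (smult (1/L) ([:0,1:] * [:0,1:] * c))"
    unfolding pe
  proof (intro poly_ext_eq)
    fix x
    have e1: "poly [:0,1:] x = x" "poly [:L,-1:] x = L - x" by simp_all
    show "poly ([:0, 1:] * (a + [:0, 1:] * b + [:L, - 1:] * c)) x =
      poly ([:0, 1:] * [:0, 1:] * b + [:0, 1:] * (a + smult (1 / L) ([:L, - 1:] * [:L, - 1:] * c)) +
            [:L, - 1:] * smult (1 / L) ([:0, 1:] * [:0, 1:] * c)) x"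
      unfolding poly_mult poly_add poly_smult e1 by (rule idX) (use L in simp)
  qed
  have L0: "0 \<le> 1 / L" using L by simp
  have s1: "sos ([:0,1:] * [:0,1:] * b)" by (rule sos_mult[OF sos_sq abc(2)])
  have s2: "sos (a + smult (1/L) ([:L,-1:] * [:L,-1:] * c))"
    by (rule sos_add[OF abc(1) sos_smult[OF L0 sos_mult[OF sos_sq abc(3)]]])
  have s3: "sos (smult (1/L) ([:0,1:] * [:0,1:] * c))"
    by (rule sos_smult[OF L0 sos_mult[OF sos_sq abc(3)]])
  show ?thesis unfolding cone_def eq using s1 s2 s3 by blast
qed

lemma cone_Lx:
  assumes L: "0 < L" and p: "cone L p"
  shows "cone L ([:L,-1:] * p)"
proof -
  obtain a b c where abc: "sos a" "sos b" "sos c" and pe: "p = a + [:0, 1:] * b + [:L, - 1:] * c"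
    using p unfolding cone_def by blast
  have eq: "[:L,-1:] * p = [:L,-1:] * [:L,-1:] * c + [:0,1:] * (smult (1/L) ([:L,-1:] * [:L,-1:] * b))
     + [:L,-1:] * (a + smult (1/L) ([:0,1:] * [:0,1:] * b))"
    unfolding pe
  proof (intro poly_ext_eq)
    fix x
    have e1: "poly [:0,1:] x = x" "poly [:L,-1:] x = L - x" by simp_all
    show "poly ([:L, - 1:] * (a + [:0, 1:] * b + [:L, - 1:] * c)) x =
      poly ([:L, - 1:] * [:L, - 1:] * c + [:0, 1:] * smult (1 / L) ([:L, - 1:] * [:L, - 1:] * b) +
            [:L, - 1:] * (a + smult (1 / L) ([:0, 1:] * [:0, 1:] * b))) x"
      unfolding poly_mult poly_add poly_smult e1 by (rule idLx) (use L in simp)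
  qed
  have L0: "0 \<le> 1 / L" using L by simp
  have s1: "sos ([:L,-1:] * [:L,-1:] * c)" by (rule sos_mult[OF sos_sq abc(3)])
  have s2: "sos (smult (1/L) ([:L,-1:] * [:L,-1:] * b))"
    by (rule sos_smult[OF L0 sos_mult[OF sos_sq abc(2)]])
  have s3: "sos (a + smult (1/L) ([:0,1:] * [:0,1:] * b))"
    by (rule sos_add[OF abc(1) sos_smult[OF L0 sos_mult[OF sos_sq abc(2)]]])
  show ?thesis unfolding cone_def eq using s1 s2 s3 by blast
qed

lemma poly_tendsto_right: "filterlim (poly (q::real poly)) (nhds (poly q r)) (at_right r)"
  using poly_isCont[where p=q and x=r] by (simp add: isCont_def filterlim_at_split)
lemma poly_tendsto_left: "filterlim (poly (q::real poly)) (nhds (poly q r)) (at_left r)"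
  using poly_isCont[where p=q and x=r] by (simp add: isCont_def filterlim_at_split)

lemma poly_right_nonneg:
  fixes q :: "real poly"
  assumes "r < b" "\<And>x. r < x \<Longrightarrow> x < b \<Longrightarrow> 0 \<le> poly q x"
  shows "0 \<le> poly q r"
proof (rule tendsto_lowerbound[OF poly_tendsto_right])
  show "\<forall>\<^sub>F x in at_right r. 0 \<le> poly q x"
    unfolding eventually_at_right_field using assms by blast
qed simp

lemma poly_left_nonneg:
  fixes q :: "real poly"
  assumes "a < r" "\<And>x. a < x \<Longrightarrow> x < r \<Longrightarrow> 0 \<le> poly q x"
  shows "0 \<le> poly q r"
proof (rule tendsto_lowerbound[OF poly_tendsto_left])
  show "\<forall>\<^sub>F x in at_left r. 0 \<le> poly q x"
    unfolding eventually_at_left_field using assms by blast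
qed simp

definition cev :: "real poly \<Rightarrow> complex \<Rightarrow> complex" where
  "cev p z = poly (map_poly complex_of_real p) z"

lemma cev_pCons: "cev (pCons a p) z = complex_of_real a + z * cev p z"
  by (simp add: cev_def map_poly_pCons)

lemma cev_0 [simp]: "cev 0 z = 0" by (simp add: cev_def)

lemma cev_real: "cev p (complex_of_real x) = complex_of_real (poly p x)"
  by (induct p) (simp_all add: cev_pCons)

lemma cev_add: "cev (p + q) z = cev p z + cev q z"
proof (induct p arbitrary: q)
  case 0 then show ?case by simp
next
  case (pCons a p)
  obtain b q' where qe: "q = pCons b q'" by (cases q)
  have "cev (p + q') z = cev p z + cev q' z" by (rule pCons(2))
  then show ?case using qe by (simp add: cev_pCons algebra_simps)
qed

lemma cev_smult: "cev (smult c p) z = complex_of_real c * cev p z"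
  by (induct p) (simp_all add: cev_pCons algebra_simps)

lemma cev_mult: "cev (p * q) z = cev p z * cev q z"
proof (induct p)
  case 0 then show ?case by simp
next
  case (pCons a p)
  have "pCons a p * q = smult a q + pCons 0 (p * q)" by simp
  then show ?case using pCons by (simp add: cev_add cev_smult cev_pCons algebra_simps)
qed

lemma degree_cev_pos:
  assumes "0 < degree p" shows "\<exists>z. cev p z = 0"
proof -
  have "degree (map_poly complex_of_real p) = degree p" by (rule degree_map_poly) simp
  then have "\<not> constant (poly (map_poly complex_of_real p))"
    using assms constant_degree[of "map_poly complex_of_real p"] by simp
  then show ?thesis unfolding cev_def using fundamental_theorem_of_algebra by blast
qed

lemma quad_factor:
  assumes z: "cev p z = 0" and im: "Im z \<noteq> 0"
  shows "p = [:(Re z)\<^sup>2 + (Im z)\<^sup>2, - 2 * Re z, 1:] * (p div [:(Re z)\<^sup>2 + (Im z)\<^sup>2, - 2 * Re z, 1:])"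
proof -
  define Q where "Q = [:(Re z)\<^sup>2 + (Im z)\<^sup>2, - 2 * Re z, 1:]"
  have Q0: "Q \<noteq> 0" by (simp add: Q_def)
  have dQ: "degree Q = 2" by (simp add: Q_def)
  have cQ: "cev Q z = 0"
    by (simp add: Q_def cev_pCons complex_eq_iff power2_eq_square algebra_simps)
  define r where "r = p mod Q"
  have pe: "p = p div Q * Q + r" by (simp add: r_def)
  have "cev r z = 0" using z cQ pe by (metis add_cancel_right_left cev_add cev_mult mult_zero_right)
  have dr: "degree r \<le> 1" using degree_mod_less[OF Q0, of p] dQ by (auto simp: r_def)
  obtain r0 r1 where re: "r = [:r0, r1:]"
  proof -
    have "r = [:coeff r 0, coeff r 1:]"
      using dr by (intro poly_eqI) (auto simp: coeff_pCons coeff_eq_0 split: nat.splits)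
    then show ?thesis using that by blast
  qed
  have "complex_of_real r0 + z * complex_of_real r1 = 0"
    using \<open>cev r z = 0\<close> by (simp add: re cev_pCons)
  then have h: "Im (complex_of_real r0 + z * complex_of_real r1) = 0"
     "Re (complex_of_real r0 + z * complex_of_real r1) = 0" by simp_all
  from h(1) have "r1 = 0" using im by simp
  with h(2) have "r0 = 0" by simp
  have "r = 0" using re \<open>r1 = 0\<close> \<open>r0 = 0\<close> by simp
  then show ?thesis using pe by (simp add: Q_def mult.commute)
qed

lemma nonneg_cone:
  assumes L: "0 < L"
  shows "(\<And>x. 0 \<le> x \<Longrightarrow> x \<le> L \<Longrightarrow> 0 \<le> poly p x) \<Longrightarrow> cone L p"
proof (induct "degree p" arbitrary: p rule: less_induct)
  case less
  note nn = less.prems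
  show ?case
  proof (cases "degree p = 0")
    case True
    then obtain c where pc: "p = [:c:]" by (metis degree_eq_zeroE)
    have "0 \<le> c" using nn[of 0] L pc by simp
    then show ?thesis using pc by (simp add: cone_sos sos_const)
  next
    case False
    then obtain z where z: "cev p z = 0" using degree_cev_pos by blast
    have p0: "p \<noteq> 0" using False by auto
    show ?thesis
    proof (cases "Im z = 0")
      case False
      define Q where "Q = [:(Re z)\<^sup>2 + (Im z)\<^sup>2, - 2 * Re z, 1:]"
      define s where "s = p div Q"
      have pe: "p = Q * s" using quad_factor[OF z False] by (simp add: Q_def s_def)
      have Qpos: "0 < poly Q x" for x
      proof -
        have "poly Q x = (x - Re z)\<^sup>2 + (Im z)\<^sup>2" by (simp add: Q_def power2_eq_square algebra_simps)
        then show ?thesis using False by (simp add: add_nonneg_pos)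
      qed
      have s0: "s \<noteq> 0" using pe p0 by auto
      have Q0: "Q \<noteq> 0" by (simp add: Q_def)
      have "degree (Q * s) = degree Q + degree s" by (rule degree_mult_eq[OF Q0 s0])
      moreover have "degree Q = 2" by (simp add: Q_def)
      ultimately have ds: "degree s < degree p" using pe by simp
      have "cone L s"
      proof (rule less.hyps[OF ds])
        fix x assume "0 \<le> x" "x \<le> L"
        then have "0 \<le> poly Q x * poly s x" using nn pe by (metis poly_mult)
        then show "0 \<le> poly s x" using Qpos[of x] by (simp add: zero_le_mult_iff)
      qed
      moreover have "sos Q"
      proof -
        have "Q = [:- Re z, 1:] * [:- Re z, 1:] + [:Im z:] * [:Im z:]"
          by (simp add: Q_def power2_eq_square)
        then show ?thesis by (metis sos_add sos_sq)
      qed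
      ultimately show ?thesis using pe cone_mult_sos by simp
    next
      case True
      define r where "r = Re z"
      have "complex_of_real (poly p r) = 0"
        using z True by (metis cev_real complex_is_Real_iff r_def of_real_Re)
      then have "poly p r = 0" by simp
      then obtain q where pe: "p = [:- r, 1:] * q" using poly_eq_0_iff_dvd by blast
      have q0: "q \<noteq> 0" using pe p0 by auto
      have "degree ([:- r, 1:] * q) = degree [:- r, 1:] + degree q"
        by (rule degree_mult_eq) (use q0 in auto)
      then have dq: "degree q < degree p" using pe by simp
      have pq: "poly p x = (x - r) * poly q x" for x unfolding pe by (simp add: algebra_simps)
      consider "r < 0" | "r = 0" | "0 < r \<and> r < L" | "r = L" | "L < r" by linarith
      then show ?thesis
      proof cases
        case 1
        have "cone L q"
        proof (rule less.hyps[OF dq])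
          fix x assume "0 \<le> x" "x \<le> L"
          then show "0 \<le> poly q x" using nn[of x] pq[of x] 1 by (simp add: zero_le_mult_iff)
        qed
        moreover have "p = [:0,1:] * q + smult (- r) q" unfolding pe
          by (intro poly_ext_eq) (simp add: algebra_simps)
        moreover have "cone L ([:0,1:] * q + smult (- r) q)"
          by (rule cone_add[OF cone_X[OF L \<open>cone L q\<close>] cone_smult[OF _ \<open>cone L q\<close>]]) (use 1 in simp)
        ultimately show ?thesis by simp
      next
        case 5
        have "cone L (- q)"
        proof (rule less.hyps)
          show "degree (- q) < degree p" using dq by simp
          fix x assume "0 \<le> x" "x \<le> L"
          then show "0 \<le> poly (- q) x" using nn[of x] pq[of x] 5 by (simp add: zero_le_mult_iff)
        qed
        moreover have "p = [:L,-1:] * (- q) + smult (r - L) (- q)" unfolding pe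
          by (intro poly_ext_eq) (simp add: algebra_simps)
        moreover have "cone L ([:L,-1:] * (- q) + smult (r - L) (- q))"
          by (rule cone_add[OF cone_Lx[OF L \<open>cone L (- q)\<close>] cone_smult[OF _ \<open>cone L (- q)\<close>]]) (use 5 in simp)
        ultimately show ?thesis by simp
      next
        case 2
        have "cone L q"
        proof (rule less.hyps[OF dq])
          fix x assume x: "0 \<le> x" "x \<le> L"
          show "0 \<le> poly q x"
          proof (cases "x = 0")
            case True
            show ?thesis unfolding True
            proof (rule poly_right_nonneg[OF L])
              fix y assume "0 < y" "y < L"
              then show "0 \<le> poly q y" using nn[of y] pq[of y] 2 by (simp add: zero_le_mult_iff)
            qed
          next
            case False
            then show ?thesis using nn[of x] pq[of x] 2 x by (simp add: zero_le_mult_iff)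
          qed
        qed
        then show ?thesis using pe 2 cone_X[OF L, of q] by simp
      next
        case 4
        have "cone L (- q)"
        proof (rule less.hyps)
          show "degree (- q) < degree p" using dq by simp
          fix x assume x: "0 \<le> x" "x \<le> L"
          show "0 \<le> poly (- q) x"
          proof (cases "x = L")
            case True
            show ?thesis unfolding True
            proof (rule poly_left_nonneg[of 0])
              show "0 < L" by fact
              fix y assume "0 < y" "y < L"
              then show "0 \<le> poly (- q) y" using nn[of y] pq[of y] 4 by (simp add: zero_le_mult_iff)
            qed
          next
            case False
            then show ?thesis using nn[of x] pq[of x] 4 x by (simp add: zero_le_mult_iff)
          qed
        qed
        moreover have "p = [:L,-1:] * (- q)" unfolding pe using 4
          by (intro poly_ext_eq) (simp add: algebra_simps)
        ultimately show ?thesis using cone_Lx[OF L, of "- q"] by simp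
      next
        case 3
        have qr1: "0 \<le> poly q r"
        proof (rule poly_right_nonneg[of r L])
          show "r < L" using 3 by simp
          fix y assume "r < y" "y < L"
          then show "0 \<le> poly q y" using nn[of y] pq[of y] 3 by (simp add: zero_le_mult_iff)
        qed
        have qr2: "0 \<le> poly (- q) r"
        proof (rule poly_left_nonneg[of 0 r])
          show "0 < r" using 3 by simp
          fix y assume "0 < y" "y < r"
          then show "0 \<le> poly (- q) y" using nn[of y] pq[of y] 3
            by (simp add: zero_le_mult_iff mult_le_0_iff)
        qed
        have "poly q r = 0" using qr1 qr2 by simp
        then obtain q2 where qe: "q = [:- r, 1:] * q2" using poly_eq_0_iff_dvd by blast
        have q20: "q2 \<noteq> 0" using qe q0 by auto
        have "degree ([:- r, 1:] * q2) = degree [:- r, 1:] + degree q2"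
          by (rule degree_mult_eq) (use q20 in auto)
        then have dq2: "degree q2 < degree p" using qe dq by simp
        have pq2: "poly p x = (x - r)\<^sup>2 * poly q2 x" for x
          unfolding pe qe by (simp add: power2_eq_square algebra_simps)
        have "cone L q2"
        proof (rule less.hyps[OF dq2])
          fix x assume x: "0 \<le> x" "x \<le> L"
          show "0 \<le> poly q2 x"
          proof (cases "x = r")
            case True
            show ?thesis unfolding True
            proof (rule poly_right_nonneg[of r L])
              show "r < L" using 3 by simp
              fix y assume "r < y" "y < L"
              then show "0 \<le> poly q2 y" using nn[of y] pq2[of y] 3 by (simp add: zero_le_mult_iff)
            qed
          next
            case False
            then have "0 < (x - r)\<^sup>2" by simp
            then show ?thesis using nn[of x] pq2[of x] x by (simp add: zero_le_mult_iff)
          qed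
        qed
        moreover have "p = ([:- r, 1:] * [:- r, 1:]) * q2" unfolding pe qe by (simp only: mult.assoc)
        ultimately show ?thesis using cone_mult_sos[OF sos_sq, of L q2 "[:- r, 1:]"] by simp
      qed
    qed
  qed
qed



lemma bern_powr:
  fixes p t :: real
  assumes p: "1 \<le> p" and t: "0 \<le> t"
  shows "1 + p * (t - 1) \<le> t powr p"
proof (cases "t = 0")
  case True then show ?thesis using p by simp
next
  case False
  then have t0: "0 < t" using t by simp
  define h where "h = (\<lambda>x::real. x powr p - p * x)"
  have dh: "DERIV h x :> p * x powr (p - 1) - p * 1" if "0 < x" for x
    unfolding h_def by (intro DERIV_diff has_real_derivative_powr[OF that] DERIV_cmult DERIV_ident)
  have "h 1 \<le> h t"
  proof (cases "1 \<le> t")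
    case True
    show ?thesis
    proof (rule DERIV_nonneg_imp_nondecreasing[OF True])
      fix x assume x: "1 \<le> x" "x \<le> t"
      have "1 \<le> x powr (p - 1)" using x p by (intro ge_one_powr_ge_zero) auto
      then have "0 \<le> p * x powr (p - 1) - p * 1" using p by (simp add: mult_left_mono[of 1 _ p, simplified])
      then show "\<exists>y. DERIV h x :> y \<and> 0 \<le> y" using dh[of x] x by auto
    qed
  next
    case False
    have "h t \<ge> h 1"
    proof (rule DERIV_nonpos_imp_nonincreasing[of t 1 h])
      show "t \<le> 1" using False by simp
      fix x assume x: "t \<le> x" "x \<le> 1"
      have "x powr (p - 1) \<le> 1" using x p t0 by (intro powr_le1) auto
      then have "p * x powr (p - 1) - p * 1 \<le> 0" using p by (simp add: mult_left_mono[of _ 1 p, simplified])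
      then show "\<exists>y. DERIV h x :> y \<and> y \<le> 0" using dh[of x] x t0 by auto
    qed
    then show ?thesis by simp
  qed
  then show ?thesis by (simp add: h_def algebra_simps)
qed

lemma tangent_powr:
  fixes p u c :: real
  assumes p: "1 \<le> p" and u: "0 \<le> u" and c: "0 < c"
  shows "c powr p + p * c powr (p - 1) * (u - c) \<le> u powr p"
proof -
  have "1 + p * (u / c - 1) \<le> (u / c) powr p" using bern_powr[OF p] u c by simp
  then have "c powr p * (1 + p * (u / c - 1)) \<le> c powr p * ((u / c) powr p)"
    by (intro mult_left_mono) auto
  also have "c powr p * ((u / c) powr p) = u powr p"
    using c by (simp add: powr_divide)
  also have "c powr p * (1 + p * (u / c - 1)) = c powr p + p * c powr (p - 1) * (u - c)"
    using c by (simp add: powr_diff field_simps)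
  finally show ?thesis .
qed

lemma convex_mid_powr:
  fixes p a b :: real
  assumes p: "1 \<le> p" and a: "0 \<le> a" and b: "0 \<le> b"
  shows "((a + b) / 2) powr p \<le> (a powr p + b powr p) / 2"
proof (cases "a + b = 0")
  case True then have "a = 0" "b = 0" using a b by auto
  then show ?thesis using p by simp
next
  case False
  define c where "c = (a + b) / 2"
  have c: "0 < c" using False a b by (simp add: c_def)
  define K where "K = p * c powr (p - 1)"
  have t1: "c powr p + K * (a - c) \<le> a powr p" unfolding K_def by (rule tangent_powr[OF p a c])
  have t2: "c powr p + K * (b - c) \<le> b powr p" unfolding K_def by (rule tangent_powr[OF p b c])
  have "(a - c) + (b - c) = 0" by (simp add: c_def)
  then have "K * (a - c) + K * (b - c) = 0" by (simp flip: distrib_left)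
  then have "2 * c powr p \<le> a powr p + b powr p" using t1 t2 by linarith
  then show ?thesis by (simp add: c_def[symmetric])
qed

lemma le_of_forall_eps:
  fixes a b K :: real
  assumes "\<And>e. 0 < e \<Longrightarrow> a \<le> b + e * K" "0 \<le> K"
  shows "a \<le> b"
proof (rule ccontr)
  assume "\<not> a \<le> b"
  then have d: "0 < a - b" by simp
  define e where "e = (a - b) / (2 * (K + 1))"
  have e: "0 < e" using d assms(2) by (simp add: e_def)
  have "e * K < a - b"
  proof -
    have "e * K = (a - b) * (K / (2 * (K + 1)))" by (simp add: e_def)
    also have "\<dots> < (a - b) * 1" using d assms(2) by (intro mult_strict_left_mono) auto
    finally show ?thesis by simp
  qed
  then show False using assms(1)[OF e] by simp
qed

section \<open>Positivity of polynomials of a positive operator\<close>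

lemma poly_op_one: "poly_op 1 P v = v"
  by (simp add: poly_op_def)

lemma sos_op_pos:
  assumes P: "posop P" and w: "\<And>u. 0 \<le> Re (cinner (poly_op w P u) u)"
  shows "sos a \<Longrightarrow> 0 \<le> Re (cinner (poly_op (w * a) P v) v)"
proof (induct a arbitrary: v rule: sos.induct)
  case (sos_sq s)
  have B: "bounded_clinear P" using P by (rule posop_bcl)
  have "w * (s * s) = s * (w * s)" by (simp add: algebra_simps)
  then have "poly_op (w * (s * s)) P v = poly_op s P (poly_op w P (poly_op s P v))"
    by (simp only: poly_op_mult[OF B])
  then have "cinner (poly_op (w * (s * s)) P v) v = cinner (poly_op w P (poly_op s P v)) (poly_op s P v)"
    by (simp add: poly_op_sa[OF P])
  then show ?case using w by simp
next
  case (sos_add p q)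
  have "w * (p + q) = w * p + w * q" by (simp add: algebra_simps)
  then show ?case using sos_add by (simp add: poly_op_add cinner_add_left)
qed

lemma cone_op_pos:
  assumes P: "posop P" and L: "0 < L" "onorm P \<le> L" and c: "cone L p"
  shows "0 \<le> Re (cinner (poly_op p P v) v)"
proof -
  have B: "bounded_clinear P" using P by (rule posop_bcl)
  obtain a b c where abc: "sos a" "sos b" "sos c" and pe: "p = a + [:0, 1:] * b + [:L, - 1:] * c"
    using c unfolding cone_def by blast
  have w1: "0 \<le> Re (cinner (poly_op 1 P u) u)" for u
    by (simp add: poly_op_one cinner_self_nonneg)
  have w2: "0 \<le> Re (cinner (poly_op [:0,1:] P u) u)" for u
    by (simp add: poly_op_x[OF B] posop_nonneg[OF P])
  have w3: "0 \<le> Re (cinner (poly_op [:L,-1:] P u) u)" for u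
  proof -
    have "poly_op [:L,-1:] P u = complex_of_real L *\<^sub>C u - P u"
      by (simp add: poly_op_pCons[OF B] poly_op_const bcl_minus[OF B] bcl_zero[OF B] scaleC_minus_left)
    then have "Re (cinner (poly_op [:L,-1:] P u) u) = L * (norm u)\<^sup>2 - Re (cinner (P u) u)"
      by (simp add: cinner_diff_left cinner_scaleC_left Re_cinner_self)
    moreover have "Re (cinner (P u) u) \<le> L * (norm u)\<^sup>2"
    proof -
      have "Re (cinner (P u) u) \<le> cmod (cinner (P u) u)" by (rule complex_Re_le_cmod)
      also have "\<dots> \<le> norm (P u) * norm u" by (rule cauchy_schwarz)
      also have "\<dots> \<le> (onorm P * norm u) * norm u" by (intro mult_right_mono bcl_onorm[OF B]) auto
      also have "\<dots> \<le> (L * norm u) * norm u" using L by (intro mult_right_mono) auto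
      finally show ?thesis by (simp add: power2_eq_square mult.assoc)
    qed
    ultimately show ?thesis by simp
  qed
  have "0 \<le> Re (cinner (poly_op (1 * a) P v) v)" by (rule sos_op_pos[OF P w1 abc(1)])
  moreover have "0 \<le> Re (cinner (poly_op ([:0,1:] * b) P v) v)" by (rule sos_op_pos[OF P w2 abc(2)])
  moreover have "0 \<le> Re (cinner (poly_op ([:L,-1:] * c) P v) v)" by (rule sos_op_pos[OF P w3 abc(3)])
  ultimately show ?thesis by (simp add: pe poly_op_add cinner_add_left)
qed

lemma poly_op_zero_op:
  assumes B: "bounded_clinear P" and z: "\<And>x. P x = 0"
  shows "poly_op q P v = complex_of_real (poly q 0) *\<^sub>C v"
proof (induct q)
  case 0 then show ?case by simp
next
  case (pCons a q)
  have "poly_op (pCons a q) P v = complex_of_real a *\<^sub>C v + P (poly_op q P v)" by (rule poly_op_pCons[OF B])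
  moreover have "P (poly_op q P v) = 0" by (rule z)
  ultimately show ?case by simp
qed

lemma onorm_zero_op:
  assumes B: "bounded_clinear P" and "onorm P = 0" shows "P x = 0"
  using onorm_eq_0[OF bcl_bounded_linear[OF B]] assms by blast

lemma poly_op_pos:
  assumes P: "posop P" and nn: "\<And>x. 0 \<le> x \<Longrightarrow> x \<le> onorm P \<Longrightarrow> 0 \<le> poly p x"
  shows "0 \<le> Re (cinner (poly_op p P v) v)"
proof (cases "onorm P = 0")
  case True
  have B: "bounded_clinear P" using P by (rule posop_bcl)
  have "poly_op p P v = complex_of_real (poly p 0) *\<^sub>C v"
    by (rule poly_op_zero_op[OF B onorm_zero_op[OF B True]])
  then show ?thesis using nn[of 0] True by (simp add: cinner_scaleC_left cinner_self)
next
  case False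
  then have L: "0 < onorm P" using bcl_onorm_nonneg[OF posop_bcl[OF P]] by simp
  show ?thesis by (rule cone_op_pos[OF P L order_refl nonneg_cone[OF L nn]])
qed

lemma poly_op_norm_bound:
  assumes P: "posop P" and bd: "\<And>x. 0 \<le> x \<Longrightarrow> x \<le> onorm P \<Longrightarrow> \<bar>poly q x\<bar> \<le> M"
  shows "norm (poly_op q P v) \<le> M * norm v"
proof -
  have B: "bounded_clinear P" using P by (rule posop_bcl)
  have L0: "0 \<le> onorm P" by (rule bcl_onorm_nonneg[OF B])
  have M0: "0 \<le> M" using bd[of 0] L0 by simp
  define p where "p = [:M\<^sup>2:] - q * q"
  have "0 \<le> poly p x" if "0 \<le> x" "x \<le> onorm P" for x
  proof -
    have "\<bar>poly q x\<bar> \<le> M" using bd that by simp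
    then have "(poly q x)\<^sup>2 \<le> M\<^sup>2" by (metis abs_le_square_iff abs_of_nonneg M0)
    then show ?thesis by (simp add: p_def power2_eq_square)
  qed
  then have "0 \<le> Re (cinner (poly_op p P v) v)" by (rule poly_op_pos[OF P])
  moreover have "poly_op p P v = complex_of_real (M\<^sup>2) *\<^sub>C v - poly_op q P (poly_op q P v)"
    by (simp add: p_def poly_op_diff poly_op_const poly_op_mult[OF B])
  moreover have "cinner (poly_op q P (poly_op q P v)) v = cinner (poly_op q P v) (poly_op q P v)"
    by (simp add: poly_op_sa[OF P])
  ultimately have "(norm (poly_op q P v))\<^sup>2 \<le> M\<^sup>2 * (norm v)\<^sup>2"
    by (simp add: cinner_diff_left cinner_scaleC_left Re_cinner_self)
  then have "(norm (poly_op q P v))\<^sup>2 \<le> (M * norm v)\<^sup>2" by (simp add: power_mult_distrib)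
  then show ?thesis using M0 power2_le_imp_le[of "norm (poly_op q P v)" "M * norm v"] by simp
qed



section \<open>Uniform approximation by polynomials\<close>

definition unif :: "(nat \<Rightarrow> real poly) \<Rightarrow> (real \<Rightarrow> real) \<Rightarrow> real \<Rightarrow> bool" where
  "unif ps f L \<longleftrightarrow> (\<forall>e>0. \<exists>N. \<forall>n\<ge>N. \<forall>x\<in>{0..L}. \<bar>poly (ps n) x - f x\<bar> < e)"

lemma unif_mono: "unif ps f L \<Longrightarrow> L' \<le> L \<Longrightarrow> unif ps f L'"
  unfolding unif_def by (meson atLeastAtMost_iff order_trans)

lemma unif_cong: "unif ps f L \<Longrightarrow> (\<And>x. 0 \<le> x \<Longrightarrow> x \<le> L \<Longrightarrow> f x = g x) \<Longrightarrow> unif ps g L"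
  unfolding unif_def by (metis atLeastAtMost_iff)

lemma unif_const: "unif (\<lambda>n. p) (poly p) L"
  unfolding unif_def by auto

lemma unif_add: "unif ps f L \<Longrightarrow> unif qs g L \<Longrightarrow> unif (\<lambda>n. ps n + qs n) (\<lambda>x. f x + g x) L"
  unfolding unif_def
proof (intro allI impI)
  fix e :: real assume e: "0 < e"
  assume a: "\<forall>e>0. \<exists>N. \<forall>n\<ge>N. \<forall>x\<in>{0..L}. \<bar>poly (ps n) x - f x\<bar> < e"
     and b: "\<forall>e>0. \<exists>N. \<forall>n\<ge>N. \<forall>x\<in>{0..L}. \<bar>poly (qs n) x - g x\<bar> < e"
  obtain N1 where N1: "\<forall>n\<ge>N1. \<forall>x\<in>{0..L}. \<bar>poly (ps n) x - f x\<bar> < e/2" using a e by (meson half_gt_zero)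
  obtain N2 where N2: "\<forall>n\<ge>N2. \<forall>x\<in>{0..L}. \<bar>poly (qs n) x - g x\<bar> < e/2" using b e by (meson half_gt_zero)
  show "\<exists>N. \<forall>n\<ge>N. \<forall>x\<in>{0..L}. \<bar>poly (ps n + qs n) x - (f x + g x)\<bar> < e"
  proof (intro exI[of _ "max N1 N2"] allI impI ballI)
    fix n x assume "max N1 N2 \<le> n" "x \<in> {0..L}"
    then have h: "\<bar>poly (ps n) x - f x\<bar> < e/2" "\<bar>poly (qs n) x - g x\<bar> < e/2" using N1 N2 by auto
    have t: "\<bar>(poly (ps n) x - f x) + (poly (qs n) x - g x)\<bar> \<le> \<bar>poly (ps n) x - f x\<bar> + \<bar>poly (qs n) x - g x\<bar>"
      by (rule abs_triangle_ineq)
    have "poly (ps n + qs n) x - (f x + g x) = (poly (ps n) x - f x) + (poly (qs n) x - g x)" by simp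
    then show "\<bar>poly (ps n + qs n) x - (f x + g x)\<bar> < e" using h t by linarith
  qed
qed

lemma unif_smult: "unif ps f L \<Longrightarrow> unif (\<lambda>n. smult c (ps n)) (\<lambda>x. c * f x) L"
  unfolding unif_def
proof (intro allI impI)
  fix e :: real assume e: "0 < e"
  assume a: "\<forall>e>0. \<exists>N. \<forall>n\<ge>N. \<forall>x\<in>{0..L}. \<bar>poly (ps n) x - f x\<bar> < e"
  have e': "0 < e / (\<bar>c\<bar> + 1)" using e by simp
  obtain N where N: "\<forall>n\<ge>N. \<forall>x\<in>{0..L}. \<bar>poly (ps n) x - f x\<bar> < e / (\<bar>c\<bar> + 1)" using a e' by blast
  show "\<exists>N. \<forall>n\<ge>N. \<forall>x\<in>{0..L}. \<bar>poly (smult c (ps n)) x - c * f x\<bar> < e"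
  proof (intro exI[of _ N] allI impI ballI)
    fix n x assume "N \<le> n" "x \<in> {0..L}"
    then have h: "\<bar>poly (ps n) x - f x\<bar> < e / (\<bar>c\<bar> + 1)" using N by auto
    have "\<bar>poly (smult c (ps n)) x - c * f x\<bar> = \<bar>c\<bar> * \<bar>poly (ps n) x - f x\<bar>"
      by (simp add: abs_mult[symmetric] algebra_simps)
    also have "\<dots> \<le> (\<bar>c\<bar> + 1) * \<bar>poly (ps n) x - f x\<bar>" by (simp add: mult_right_mono)
    also have "\<dots> < (\<bar>c\<bar> + 1) * (e / (\<bar>c\<bar> + 1))"
      using h by (intro mult_strict_left_mono) auto
    also have "\<dots> = e" by simp
    finally show "\<bar>poly (smult c (ps n)) x - c * f x\<bar> < e" .
  qed
qed

lemma bounded_on_Icc: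
  fixes f :: "real \<Rightarrow> real"
  assumes "continuous_on {0..L} f"
  shows "\<exists>M. \<forall>x\<in>{0..L}. \<bar>f x\<bar> \<le> M"
proof -
  have "compact (f ` {0..L})" by (rule compact_continuous_image[OF assms compact_Icc])
  then have "bounded (f ` {0..L})" by (rule compact_imp_bounded)
  then show ?thesis unfolding bounded_iff by auto
qed

lemma unif_mult:
  assumes a: "unif ps f L" and b: "unif qs g L" and cf: "continuous_on {0..L} f" and cg: "continuous_on {0..L} g"
  shows "unif (\<lambda>n. ps n * qs n) (\<lambda>x. f x * g x) L"
  unfolding unif_def
proof (intro allI impI)
  fix e :: real assume e: "0 < e"
  obtain Mf where Mf: "\<forall>x\<in>{0..L}. \<bar>f x\<bar> \<le> Mf" using bounded_on_Icc[OF cf] by blast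
  obtain Mg where Mg: "\<forall>x\<in>{0..L}. \<bar>g x\<bar> \<le> Mg" using bounded_on_Icc[OF cg] by blast
  define K where "K = \<bar>Mf\<bar> + \<bar>Mg\<bar> + 2"
  have K: "0 < K" by (simp add: K_def add_pos_nonneg)
  define d where "d = min 1 (e / K)"
  have d: "0 < d" "d \<le> 1" "d * K \<le> e" using e K by (auto simp: d_def min_def field_simps)
  obtain N1 where N1: "\<forall>n\<ge>N1. \<forall>x\<in>{0..L}. \<bar>poly (ps n) x - f x\<bar> < d" using a d unfolding unif_def by blast
  obtain N2 where N2: "\<forall>n\<ge>N2. \<forall>x\<in>{0..L}. \<bar>poly (qs n) x - g x\<bar> < d" using b d unfolding unif_def by blast
  show "\<exists>N. \<forall>n\<ge>N. \<forall>x\<in>{0..L}. \<bar>poly (ps n * qs n) x - f x * g x\<bar> < e"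
  proof (intro exI[of _ "max N1 N2"] allI impI ballI)
    fix n x assume n: "max N1 N2 \<le> n" and x: "x \<in> {0..L}"
    define u where "u = poly (ps n) x - f x"
    define w where "w = poly (qs n) x - g x"
    have u: "\<bar>u\<bar> < d" and w: "\<bar>w\<bar> < d" using N1 N2 n x by (auto simp: u_def w_def)
    have fx: "\<bar>f x\<bar> \<le> \<bar>Mf\<bar>" and gx: "\<bar>g x\<bar> \<le> \<bar>Mg\<bar>" using Mf Mg x by fastforce+
    have "poly (ps n * qs n) x - f x * g x = u * g x + f x * w + u * w"
      by (simp add: u_def w_def algebra_simps)
    then have "\<bar>poly (ps n * qs n) x - f x * g x\<bar> \<le> \<bar>u\<bar> * \<bar>g x\<bar> + \<bar>f x\<bar> * \<bar>w\<bar> + \<bar>u\<bar> * \<bar>w\<bar>"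
      by (simp add: abs_mult[symmetric])
    also have "\<dots> \<le> d * \<bar>Mg\<bar> + \<bar>Mf\<bar> * d + d * 1"
      using u w fx gx d by (intro add_mono mult_mono) auto
    also have "\<dots> < d * K" using d by (simp add: K_def algebra_simps)
    also have "\<dots> \<le> e" by (rule d(3))
    finally show "\<bar>poly (ps n * qs n) x - f x * g x\<bar> < e" .
  qed
qed

lemma weierstrass:
  assumes "continuous_on {0..L} f" shows "\<exists>ps. unif ps f L"
proof -
  have "\<exists>p. \<forall>x\<in>{0..L}. \<bar>poly p x - f x\<bar> < 1 / Suc n" for n
  proof -
    obtain g where g: "real_polynomial_function g" "\<And>x. x \<in> {0..L} \<Longrightarrow> \<bar>f x - g x\<bar> < 1 / Suc n"
      using Stone_Weierstrass_real_polynomial_function[OF compact_Icc assms, of "1 / Suc n"] by auto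
    obtain a m where ge: "g = (\<lambda>x. \<Sum>i\<le>m. a i * x ^ i)" using g(1) real_polynomial_function_iff_sum by blast
    define p where "p = (\<Sum>i\<le>m. monom (a i) i)"
    have "poly p x = g x" for x by (simp add: p_def ge poly_sum poly_monom)
    then show ?thesis using g(2) by (metis abs_minus_commute)
  qed
  then obtain ps where ps: "\<And>n x. x \<in> {0..L} \<Longrightarrow> \<bar>poly (ps n) x - f x\<bar> < 1 / Suc n" by metis
  have "unif ps f L" unfolding unif_def
  proof (intro allI impI)
    fix e :: real assume e: "0 < e"
    obtain N :: nat where N: "1 / e < N" using reals_Archimedean2 by blast
    show "\<exists>N. \<forall>n\<ge>N. \<forall>x\<in>{0..L}. \<bar>poly (ps n) x - f x\<bar> < e"
    proof (intro exI[of _ N] allI impI ballI)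
      fix n x assume n: "N \<le> n" and x: "x \<in> {0..L}"
      have "real N \<le> real n" using n by simp
      then have "1 / e < real (Suc n)" using N by simp
      then have "1 < real (Suc n) * e" using e by (simp add: pos_divide_less_eq)
      then have "1 / real (Suc n) < e" by (simp add: pos_divide_less_eq mult.commute)
      then show "\<bar>poly (ps n) x - f x\<bar> < e" using ps[OF x, of n] by simp
    qed
  qed
  then show ?thesis by blast
qed

lemma norm3: "norm (a + b - c) \<le> norm a + norm b + norm (c::'a::real_normed_vector)"
proof -
  have "norm (a + b - c) \<le> norm (a + b) + norm c" by (rule norm_triangle_ineq4)
  moreover have "norm (a + b) \<le> norm a + norm b" by (rule norm_triangle_ineq)
  ultimately show ?thesis by linarith
qed

definition opconv :: "(nat \<Rightarrow> 'a::real_normed_vector \<Rightarrow> 'b::real_normed_vector) \<Rightarrow> ('a \<Rightarrow> 'b) \<Rightarrow> bool" where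
  "opconv A Q \<longleftrightarrow> (\<forall>e>0. \<exists>N. \<forall>n\<ge>N. \<forall>v. norm (A n v - Q v) \<le> e * norm v)"

lemma opconvD: "opconv A Q \<Longrightarrow> 0 < e \<Longrightarrow> \<exists>N. \<forall>n\<ge>N. \<forall>v. norm (A n v - Q v) \<le> e * norm v"
  unfolding opconv_def by blast

lemma opconv_unique:
  assumes a: "opconv A Q" and b: "opconv A Q'"
  shows "Q = Q'"
proof
  fix v
  have h: "norm (Q v - Q' v) \<le> 0 + e * (2 * norm v)" if e: "0 < e" for e
  proof -
    obtain N1 where N1: "\<forall>n\<ge>N1. \<forall>v. norm (A n v - Q v) \<le> e * norm v" using opconvD[OF a e] by blast
    obtain N2 where N2: "\<forall>n\<ge>N2. \<forall>v. norm (A n v - Q' v) \<le> e * norm v" using opconvD[OF b e] by blast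
    define n where "n = max N1 N2"
    have "norm (Q v - Q' v) \<le> norm (A n v - Q' v) + norm (A n v - Q v)"
      using norm_triangle_ineq4[of "A n v - Q' v" "A n v - Q v"] by simp
    then have "norm (Q v - Q' v) \<le> norm (A n v - Q v) + norm (A n v - Q' v)" by simp
    also have "\<dots> \<le> e * norm v + e * norm v" using N1 N2 by (intro add_mono) (auto simp: n_def)
    finally show ?thesis by simp
  qed
  have k: "0 \<le> 2 * norm v" by simp
  have "norm (Q v - Q' v) \<le> 0" by (rule le_of_forall_eps[OF h k])
  then show "Q v = Q' v" by simp
qed

lemma opconv_add:
  assumes a: "opconv A Q" and b: "opconv B R"
  shows "opconv (\<lambda>n v. A n v + B n v) (\<lambda>v. Q v + R v)"
  unfolding opconv_def
proof (intro allI impI)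
  fix e :: real assume e: "0 < e"
  obtain N1 where N1: "\<forall>n\<ge>N1. \<forall>v. norm (A n v - Q v) \<le> e/2 * norm v" using opconvD[OF a] e by (meson half_gt_zero)
  obtain N2 where N2: "\<forall>n\<ge>N2. \<forall>v. norm (B n v - R v) \<le> e/2 * norm v" using opconvD[OF b] e by (meson half_gt_zero)
  show "\<exists>N. \<forall>n\<ge>N. \<forall>v. norm (A n v + B n v - (Q v + R v)) \<le> e * norm v"
  proof (intro exI[of _ "max N1 N2"] allI impI)
    fix n v assume n: "max N1 N2 \<le> n"
    have "norm (A n v + B n v - (Q v + R v)) \<le> norm (A n v - Q v) + norm (B n v - R v)"
      by (metis add_diff_add norm_triangle_ineq)
    also have "\<dots> \<le> e/2 * norm v + e/2 * norm v" using N1 N2 n by (intro add_mono) auto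
    finally show "norm (A n v + B n v - (Q v + R v)) \<le> e * norm v" by simp
  qed
qed

lemma opconv_scale:
  fixes A :: "nat \<Rightarrow> 'a::real_normed_vector \<Rightarrow> 'b::complex_normed_vector"
  assumes a: "opconv A Q"
  shows "opconv (\<lambda>n v. c *\<^sub>C A n v) (\<lambda>v. c *\<^sub>C Q v)"
  unfolding opconv_def
proof (intro allI impI)
  fix e :: real assume e: "0 < e"
  have c1: "0 < cmod c + 1" by (smt (verit) norm_ge_zero)
  have e': "0 < e / (cmod c + 1)" by (rule divide_pos_pos[OF e c1])
  obtain N where N: "\<forall>n\<ge>N. \<forall>v. norm (A n v - Q v) \<le> e / (cmod c + 1) * norm v" using opconvD[OF a e'] by blast
  show "\<exists>N. \<forall>n\<ge>N. \<forall>v. norm (c *\<^sub>C A n v - c *\<^sub>C Q v) \<le> e * norm v"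
  proof (intro exI[of _ N] allI impI)
    fix n v assume n: "N \<le> n"
    have "norm (c *\<^sub>C A n v - c *\<^sub>C Q v) = cmod c * norm (A n v - Q v)"
      by (simp add: scaleC_diff_right[symmetric] norm_scaleC)
    also have "\<dots> \<le> (cmod c + 1) * (e / (cmod c + 1) * norm v)"
      using N n by (intro mult_mono) auto
    also have "\<dots> = e * norm v" using c1 by simp
    finally show "norm (c *\<^sub>C A n v - c *\<^sub>C Q v) \<le> e * norm v" .
  qed
qed

lemma opconv_compose_left:
  assumes a: "opconv A Q" and C: "bounded_clinear C"
  shows "opconv (\<lambda>n v. C (A n v)) (\<lambda>v. C (Q v))"
  unfolding opconv_def
proof (intro allI impI)
  fix e :: real assume e: "0 < e"
  have K: "0 \<le> onorm C" by (rule bcl_onorm_nonneg[OF C])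
  have e': "0 < e / (onorm C + 1)" using e K by simp
  obtain N where N: "\<forall>n\<ge>N. \<forall>v. norm (A n v - Q v) \<le> e / (onorm C + 1) * norm v" using opconvD[OF a e'] by blast
  show "\<exists>N. \<forall>n\<ge>N. \<forall>v. norm (C (A n v) - C (Q v)) \<le> e * norm v"
  proof (intro exI[of _ N] allI impI)
    fix n v assume n: "N \<le> n"
    have "norm (C (A n v) - C (Q v)) = norm (C (A n v - Q v))" by (simp add: bcl_diff[OF C])
    also have "\<dots> \<le> onorm C * norm (A n v - Q v)" by (rule bcl_onorm[OF C])
    also have "\<dots> \<le> (onorm C + 1) * (e / (onorm C + 1) * norm v)"
      using N n K by (intro mult_mono) auto
    also have "\<dots> = e * norm v" using K by simp
    finally show "norm (C (A n v) - C (Q v)) \<le> e * norm v" .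
  qed
qed

lemma opconv_compose_right:
  assumes a: "opconv A Q" and C: "bounded_clinear C"
  shows "opconv (\<lambda>n v. A n (C v)) (\<lambda>v. Q (C v))"
  unfolding opconv_def
proof (intro allI impI)
  fix e :: real assume e: "0 < e"
  have K: "0 \<le> onorm C" by (rule bcl_onorm_nonneg[OF C])
  have e': "0 < e / (onorm C + 1)" using e K by simp
  obtain N where N: "\<forall>n\<ge>N. \<forall>v. norm (A n v - Q v) \<le> e / (onorm C + 1) * norm v" using opconvD[OF a e'] by blast
  show "\<exists>N. \<forall>n\<ge>N. \<forall>v. norm (A n (C v) - Q (C v)) \<le> e * norm v"
  proof (intro exI[of _ N] allI impI)
    fix n v assume n: "N \<le> n"
    have "norm (A n (C v) - Q (C v)) \<le> e / (onorm C + 1) * norm (C v)" using N n by blast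
    also have "\<dots> \<le> e / (onorm C + 1) * ((onorm C + 1) * norm v)"
    proof (rule mult_left_mono)
      have "onorm C * norm v \<le> (onorm C + 1) * norm v" by (intro mult_right_mono) auto
      then show "norm (C v) \<le> (onorm C + 1) * norm v" using bcl_onorm[OF C, of v] by linarith
    qed (use e K in simp)
    also have "\<dots> = e * norm v" using K by simp
    finally show "norm (A n (C v) - Q (C v)) \<le> e * norm v" .
  qed
qed

lemma opconv_mult:
  assumes a: "opconv A Q" and b: "opconv B R" and R: "bounded_clinear R"
    and Ab: "\<And>n. bounded_clinear (A n)" and K: "\<And>n v. norm (A n v) \<le> K * norm v" and K0: "0 \<le> K"
  shows "opconv (\<lambda>n v. A n (B n v)) (\<lambda>v. Q (R v))"
  unfolding opconv_def
proof (intro allI impI)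
  fix e :: real assume e: "0 < e"
  have R0: "0 \<le> onorm R" by (rule bcl_onorm_nonneg[OF R])
  define d where "d = e / (K + onorm R + 1)"
  have d: "0 < d" using e K0 R0 by (simp add: d_def)
  obtain N1 where N1: "\<forall>n\<ge>N1. \<forall>v. norm (A n v - Q v) \<le> d * norm v" using opconvD[OF a d] by blast
  obtain N2 where N2: "\<forall>n\<ge>N2. \<forall>v. norm (B n v - R v) \<le> d * norm v" using opconvD[OF b d] by blast
  show "\<exists>N. \<forall>n\<ge>N. \<forall>v. norm (A n (B n v) - Q (R v)) \<le> e * norm v"
  proof (intro exI[of _ "max N1 N2"] allI impI)
    fix n v assume n: "max N1 N2 \<le> n"
    have "A n (B n v) - Q (R v) = A n (B n v - R v) + (A n (R v) - Q (R v))"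
      by (simp add: bcl_diff[OF Ab])
    then have "norm (A n (B n v) - Q (R v)) \<le> norm (A n (B n v - R v)) + norm (A n (R v) - Q (R v))"
      by (metis norm_triangle_ineq)
    also have "\<dots> \<le> K * (d * norm v) + d * (onorm R * norm v)"
    proof (rule add_mono)
      show "norm (A n (B n v - R v)) \<le> K * (d * norm v)"
        using K[of n "B n v - R v"] N2 n K0 by (meson max.boundedE mult_left_mono order_trans)
      have "norm (A n (R v) - Q (R v)) \<le> d * norm (R v)" using N1 n by auto
      also have "\<dots> \<le> d * (onorm R * norm v)" using d by (intro mult_left_mono bcl_onorm[OF R]) auto
      finally show "norm (A n (R v) - Q (R v)) \<le> d * (onorm R * norm v)" .
    qed
    also have "\<dots> = d * (K + onorm R) * norm v" by (simp add: algebra_simps)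
    also have "\<dots> \<le> d * (K + onorm R + 1) * norm v" using d by (intro mult_right_mono mult_left_mono) auto
    also have "\<dots> = e * norm v" using K0 R0 by (simp add: d_def)
    finally show "norm (A n (B n v) - Q (R v)) \<le> e * norm v" .
  qed
qed

lemma opconv_bcl:
  fixes A :: "nat \<Rightarrow> 'a::complex_normed_vector \<Rightarrow> 'b::complex_normed_vector"
  assumes a: "opconv A Q" and Ab: "\<And>n. bounded_clinear (A n)"
  shows "bounded_clinear Q"
proof -
  have small: "w = 0" if "\<And>e. 0 < e \<Longrightarrow> norm w \<le> e * K" "0 \<le> K" for w :: 'b and K
  proof -
    have "norm w \<le> 0"
    proof (rule le_of_forall_eps[where K=K])
      fix e :: real assume "0 < e" then show "norm w \<le> 0 + e * K" using that(1) by simp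
    qed (rule that(2))
    then show ?thesis by simp
  qed
  show ?thesis
  proof (rule bcl_intro[where K="onorm (A (SOME N. \<forall>n\<ge>N. \<forall>v. norm (A n v - Q v) \<le> 1 * norm v)) + 1"])
    fix x y
    show "Q (x + y) = Q x + Q y"
    proof -
      have "Q (x + y) - (Q x + Q y) = 0"
      proof (rule small[where K="norm (x + y) + norm x + norm y"])
        fix e :: real assume e: "0 < e"
        obtain N where N: "\<forall>n\<ge>N. \<forall>v. norm (A n v - Q v) \<le> e * norm v" using opconvD[OF a e] by blast
        have "Q (x + y) - (Q x + Q y) = (A N x - Q x) + (A N y - Q y) - (A N (x + y) - Q (x + y))"
          by (simp add: bcl_linear[OF Ab] algebra_simps)
        then have "norm (Q (x + y) - (Q x + Q y)) \<le> norm (A N x - Q x) + norm (A N y - Q y) + norm (A N (x + y) - Q (x + y))"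
          by (simp only: norm3)
        also have "\<dots> \<le> e * norm x + e * norm y + e * norm (x + y)" using N by (intro add_mono) auto
        finally show "norm (Q (x + y) - (Q x + Q y)) \<le> e * (norm (x + y) + norm x + norm y)"
          by (simp add: algebra_simps)
      qed simp
      then show ?thesis by simp
    qed
  next
    fix c x
    show "Q (c *\<^sub>C x) = c *\<^sub>C Q x"
    proof -
      have "Q (c *\<^sub>C x) - c *\<^sub>C Q x = 0"
      proof (rule small[where K="norm (c *\<^sub>C x) + cmod c * norm x"])
        fix e :: real assume e: "0 < e"
        obtain N where N: "\<forall>n\<ge>N. \<forall>v. norm (A n v - Q v) \<le> e * norm v" using opconvD[OF a e] by blast
        have eq: "Q (c *\<^sub>C x) - c *\<^sub>C Q x = c *\<^sub>C (A N x - Q x) - (A N (c *\<^sub>C x) - Q (c *\<^sub>C x))"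
          by (simp add: bcl_scaleC[OF Ab] scaleC_diff_right)
        have f: "norm (c *\<^sub>C (A N x - Q x) - (A N (c *\<^sub>C x) - Q (c *\<^sub>C x))) \<le> cmod c * norm (A N x - Q x) + norm (A N (c *\<^sub>C x) - Q (c *\<^sub>C x))"
          using norm_triangle_ineq4[of "c *\<^sub>C (A N x - Q x)" "A N (c *\<^sub>C x) - Q (c *\<^sub>C x)"]
          by (simp add: norm_scaleC)
        have "norm (Q (c *\<^sub>C x) - c *\<^sub>C Q x) \<le> cmod c * norm (A N x - Q x) + norm (A N (c *\<^sub>C x) - Q (c *\<^sub>C x))"
          unfolding eq by (rule f)
        also have "\<dots> \<le> cmod c * (e * norm x) + e * norm (c *\<^sub>C x)"
          using N by (intro add_mono mult_left_mono) auto
        finally show "norm (Q (c *\<^sub>C x) - c *\<^sub>C Q x) \<le> e * (norm (c *\<^sub>C x) + cmod c * norm x)"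
          by (simp add: algebra_simps)
      qed simp
      then show ?thesis by simp
    qed
  next
    fix v
    define N where "N = (SOME N. \<forall>n\<ge>N. \<forall>v. norm (A n v - Q v) \<le> 1 * norm v)"
    have "\<forall>n\<ge>N. \<forall>v. norm (A n v - Q v) \<le> 1 * norm v"
      unfolding N_def by (rule someI_ex) (rule opconvD[OF a], simp)
    then have h: "norm (A N v - Q v) \<le> norm v" by simp
    have "norm (Q v) \<le> norm (A N v) + norm (A N v - Q v)"
      using norm_triangle_ineq4[of "A N v" "A N v - Q v"] by simp
    also have "\<dots> \<le> onorm (A N) * norm v + norm v" by (intro add_mono bcl_onorm[OF Ab] h)
    finally show "norm (Q v) \<le> (onorm (A N) + 1) * norm v" by (simp add: algebra_simps N_def)
  qed
qed

lemma opconv_onorm: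
  assumes a: "opconv A Q" and b: "\<And>n. bounded_clinear (\<lambda>v. A n v - Q v)"
  shows "(\<lambda>n. onorm (\<lambda>v. A n v - Q v)) \<longlonglongrightarrow> 0"
proof (rule LIMSEQ_I)
  fix r :: real assume r: "0 < r"
  obtain N where N: "\<forall>n\<ge>N. \<forall>v. norm (A n v - Q v) \<le> r/2 * norm v" using opconvD[OF a] r by (meson half_gt_zero)
  show "\<exists>no. \<forall>n\<ge>no. norm (onorm (\<lambda>v. A n v - Q v) - 0) < r"
  proof (intro exI[of _ N] allI impI)
    fix n assume n: "N \<le> n"
    have "onorm (\<lambda>v. A n v - Q v) \<le> r/2" using N n r by (intro onorm_bound) auto
    moreover have "0 \<le> onorm (\<lambda>v. A n v - Q v)" by (rule bcl_onorm_nonneg[OF b])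
    ultimately show "norm (onorm (\<lambda>v. A n v - Q v) - 0) < r" using r by simp
  qed
qed

lemma onorm_opconv:
  assumes b: "\<And>n. bounded_clinear (\<lambda>v. A n v - Q v)" and l: "(\<lambda>n. onorm (\<lambda>v. A n v - Q v)) \<longlonglongrightarrow> 0"
  shows "opconv A Q"
  unfolding opconv_def
proof (intro allI impI)
  fix e :: real assume e: "0 < e"
  obtain N where N: "\<forall>n\<ge>N. norm (onorm (\<lambda>v. A n v - Q v) - 0) < e" using LIMSEQ_D[OF l e] by blast
  show "\<exists>N. \<forall>n\<ge>N. \<forall>v. norm (A n v - Q v) \<le> e * norm v"
  proof (intro exI[of _ N] allI impI)
    fix n v assume n: "N \<le> n"
    have "norm (A n v - Q v) \<le> onorm (\<lambda>v. A n v - Q v) * norm v" by (rule bcl_onorm[OF b])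
    also have "\<dots> \<le> e * norm v" using N n by (intro mult_right_mono) auto
    finally show "norm (A n v - Q v) \<le> e * norm v" .
  qed
qed



section \<open>Continuous functional calculus\<close>

definition apx :: "('a::chilbert_space \<Rightarrow> 'a) \<Rightarrow> (real \<Rightarrow> real) \<Rightarrow> nat \<Rightarrow> real poly" where
  "apx P f = (SOME ps. unif ps f (onorm P))"

definition fc :: "('a::chilbert_space \<Rightarrow> 'a) \<Rightarrow> (real \<Rightarrow> real) \<Rightarrow> 'a \<Rightarrow> 'a" where
  "fc P f v = lim (\<lambda>n. poly_op (apx P f n) P v)"

lemma cont_Icc: "continuous_on {0..} f \<Longrightarrow> continuous_on {0..L} f"
  by (rule continuous_on_subset) auto

lemma apx_unif: "continuous_on {0..} f \<Longrightarrow> unif (apx P f) f (onorm P)"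
  unfolding apx_def by (rule someI_ex[OF weierstrass[OF cont_Icc]])

lemma opconv_refl: "opconv (\<lambda>n. Q) Q"
  unfolding opconv_def by auto

lemma opconv_shift: "opconv (\<lambda>n. A (n + k)) Q \<Longrightarrow> opconv A Q"
  unfolding opconv_def
proof (intro allI impI)
  fix e :: real assume a: "\<forall>e>0. \<exists>N. \<forall>n\<ge>N. \<forall>v. norm (A (n + k) v - Q v) \<le> e * norm v" and e: "0 < e"
  then obtain N where N: "\<forall>n\<ge>N. \<forall>v. norm (A (n + k) v - Q v) \<le> e * norm v" by blast
  show "\<exists>N. \<forall>n\<ge>N. \<forall>v. norm (A n v - Q v) \<le> e * norm v"
  proof (intro exI[of _ "N + k"] allI impI)
    fix n v assume "N + k \<le> n"
    then have "N \<le> n - k" "n - k + k = n" by auto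
    then show "norm (A n v - Q v) \<le> e * norm v" using N by metis
  qed
qed

lemma opconv_shift2: "opconv A Q \<Longrightarrow> opconv (\<lambda>n. A (n + k)) Q"
  unfolding opconv_def by (meson le_add1 order_trans)

lemma poly_opconv_cauchy:
  assumes P: "posop P" and a: "unif ps f (onorm P)" and b: "unif qs f (onorm P)" and e: "0 < e"
  shows "\<exists>N. \<forall>m\<ge>N. \<forall>n\<ge>N. \<forall>v. norm (poly_op (ps m) P v - poly_op (qs n) P v) \<le> e * norm v"
proof -
  have e2: "0 < e / 2" using e by simp
  obtain N1 where N1: "\<forall>n\<ge>N1. \<forall>x\<in>{0..onorm P}. \<bar>poly (ps n) x - f x\<bar> < e / 2"
    using a e2 unfolding unif_def by blast
  obtain N2 where N2: "\<forall>n\<ge>N2. \<forall>x\<in>{0..onorm P}. \<bar>poly (qs n) x - f x\<bar> < e / 2"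
    using b e2 unfolding unif_def by blast
  show ?thesis
  proof (intro exI[of _ "max N1 N2"] allI impI)
    fix m n v assume m: "max N1 N2 \<le> m" and n: "max N1 N2 \<le> n"
    have "norm (poly_op (ps m - qs n) P v) \<le> e * norm v"
    proof (rule poly_op_norm_bound[OF P])
      fix x assume x: "0 \<le> x" "x \<le> onorm P"
      have "\<bar>poly (ps m) x - f x\<bar> < e / 2" "\<bar>poly (qs n) x - f x\<bar> < e / 2" using N1 N2 m n x by auto
      then show "\<bar>poly (ps m - qs n) x\<bar> \<le> e" by simp (smt (verit))
    qed
    then show "norm (poly_op (ps m) P v - poly_op (qs n) P v) \<le> e * norm v" by (simp add: poly_op_diff)
  qed
qed

lemma fc_opconv:
  assumes P: "posop P" and cf: "continuous_on {0..} f" and a: "unif ps f (onorm P)"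
  shows "opconv (\<lambda>n. poly_op (ps n) P) (fc P f)"
proof -
  define qs where "qs = apx P f"
  have b: "unif qs f (onorm P)" unfolding qs_def by (rule apx_unif[OF cf])
  have lim: "(\<lambda>n. poly_op (qs n) P v) \<longlonglongrightarrow> fc P f v" for v
  proof -
    have "Cauchy (\<lambda>n. poly_op (qs n) P v)"
    proof (rule metric_CauchyI)
      fix \<epsilon> :: real assume \<epsilon>: "0 < \<epsilon>"
      define d where "d = \<epsilon> / (norm v + 1)"
      have nv: "0 < norm v + 1" by (smt (verit) norm_ge_zero)
      have d: "0 < d" unfolding d_def by (rule divide_pos_pos[OF \<epsilon> nv])
      obtain N where N: "\<forall>m\<ge>N. \<forall>n\<ge>N. \<forall>v. norm (poly_op (qs m) P v - poly_op (qs n) P v) \<le> d * norm v"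
        using poly_opconv_cauchy[OF P b b d] by blast
      have dv: "d * norm v < \<epsilon>"
      proof -
        have "d * norm v < d * (norm v + 1)" using d by simp
        also have "\<dots> = \<epsilon>" using nv by (simp add: d_def)
        finally show ?thesis .
      qed
      show "\<exists>M. \<forall>m\<ge>M. \<forall>n\<ge>M. dist (poly_op (qs m) P v) (poly_op (qs n) P v) < \<epsilon>"
      proof (intro exI[of _ N] allI impI)
        fix m n assume "N \<le> m" "N \<le> n"
        then have "norm (poly_op (qs m) P v - poly_op (qs n) P v) \<le> d * norm v" using N by blast
        then show "dist (poly_op (qs m) P v) (poly_op (qs n) P v) < \<epsilon>" using dv by (simp add: dist_norm)
      qed
    qed
    then show ?thesis unfolding fc_def qs_def by (simp add: Cauchy_convergent_iff convergent_LIMSEQ_iff)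
  qed
  show ?thesis unfolding opconv_def
  proof (intro allI impI)
    fix e :: real assume e: "0 < e"
    obtain N where N: "\<forall>m\<ge>N. \<forall>n\<ge>N. \<forall>v. norm (poly_op (ps m) P v - poly_op (qs n) P v) \<le> e * norm v"
      using poly_opconv_cauchy[OF P a b e] by blast
    show "\<exists>N. \<forall>n\<ge>N. \<forall>v. norm (poly_op (ps n) P v - fc P f v) \<le> e * norm v"
    proof (intro exI[of _ N] allI impI)
      fix n v assume n: "N \<le> n"
      have l: "(\<lambda>m. norm (poly_op (ps n) P v - poly_op (qs m) P v)) \<longlonglongrightarrow> norm (poly_op (ps n) P v - fc P f v)"
        by (intro tendsto_norm tendsto_diff tendsto_const lim)
      have ev: "\<forall>\<^sub>F m in sequentially. norm (poly_op (ps n) P v - poly_op (qs m) P v) \<le> e * norm v"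
        using N n unfolding eventually_sequentially by blast
      show "norm (poly_op (ps n) P v - fc P f v) \<le> e * norm v"
        by (rule tendsto_upperbound[OF l ev sequentially_bot])
    qed
  qed
qed

lemma fc_opconv_apx: "posop P \<Longrightarrow> continuous_on {0..} f \<Longrightarrow> opconv (\<lambda>n. poly_op (apx P f n) P) (fc P f)"
  by (rule fc_opconv[OF _ _ apx_unif])

lemma fc_bcl:
  assumes P: "posop P" and cf: "continuous_on {0..} f"
  shows "bounded_clinear (fc P f)"
  by (rule opconv_bcl[OF fc_opconv_apx[OF P cf] poly_op_bcl[OF posop_bcl[OF P]]])

lemma cont_poly: "continuous_on S (poly (p::real poly))"
  by (rule continuous_at_imp_continuous_on) (simp add: poly_isCont)

lemma fc_poly:
  assumes P: "posop P"
  shows "fc P (poly p) = poly_op p P"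
  by (rule opconv_unique[OF fc_opconv[OF P cont_poly unif_const] opconv_refl])

lemma fc_cong:
  assumes P: "posop P" and cf: "continuous_on {0..} f" and cg: "continuous_on {0..} g"
    and eq: "\<And>x. 0 \<le> x \<Longrightarrow> f x = g x"
  shows "fc P f = fc P g"
proof -
  have "unif (apx P f) g (onorm P)" by (rule unif_cong[OF apx_unif[OF cf] eq])
  then show ?thesis by (rule opconv_unique[OF fc_opconv_apx[OF P cf] fc_opconv[OF P cg]])
qed

lemma fc_add:
  assumes P: "posop P" and cf: "continuous_on {0..} f" and cg: "continuous_on {0..} g"
  shows "fc P (\<lambda>x. f x + g x) = (\<lambda>v. fc P f v + fc P g v)"
proof -
  have cfg: "continuous_on {0..} (\<lambda>x. f x + g x)" by (intro continuous_intros cf cg)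
  have u: "unif (\<lambda>n. apx P f n + apx P g n) (\<lambda>x. f x + g x) (onorm P)"
    by (rule unif_add[OF apx_unif[OF cf] apx_unif[OF cg]])
  have "opconv (\<lambda>n v. poly_op (apx P f n) P v + poly_op (apx P g n) P v) (\<lambda>v. fc P f v + fc P g v)"
    by (rule opconv_add[OF fc_opconv_apx[OF P cf] fc_opconv_apx[OF P cg]])
  moreover have "(\<lambda>n. poly_op (apx P f n + apx P g n) P) = (\<lambda>n v. poly_op (apx P f n) P v + poly_op (apx P g n) P v)"
    by (simp add: fun_eq_iff poly_op_add)
  ultimately have "opconv (\<lambda>n. poly_op (apx P f n + apx P g n) P) (\<lambda>v. fc P f v + fc P g v)"
    by simp
  then show ?thesis by (rule opconv_unique[OF fc_opconv[OF P cfg u]])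
qed

lemma fc_smult:
  assumes P: "posop P" and cf: "continuous_on {0..} f"
  shows "fc P (\<lambda>x. c * f x) = (\<lambda>v. complex_of_real c *\<^sub>C fc P f v)"
proof -
  have cfg: "continuous_on {0..} (\<lambda>x. c * f x)" by (intro continuous_intros cf)
  have u: "unif (\<lambda>n. smult c (apx P f n)) (\<lambda>x. c * f x) (onorm P)"
    by (rule unif_smult[OF apx_unif[OF cf]])
  have "opconv (\<lambda>n v. complex_of_real c *\<^sub>C poly_op (apx P f n) P v) (\<lambda>v. complex_of_real c *\<^sub>C fc P f v)"
    by (rule opconv_scale[OF fc_opconv_apx[OF P cf]])
  moreover have "(\<lambda>n. poly_op (smult c (apx P f n)) P) = (\<lambda>n v. complex_of_real c *\<^sub>C poly_op (apx P f n) P v)"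
    by (simp add: fun_eq_iff poly_op_smult)
  ultimately have "opconv (\<lambda>n. poly_op (smult c (apx P f n)) P) (\<lambda>v. complex_of_real c *\<^sub>C fc P f v)"
    by simp
  then show ?thesis by (rule opconv_unique[OF fc_opconv[OF P cfg u]])
qed

lemma fc_diff:
  assumes P: "posop P" and cf: "continuous_on {0..} f" and cg: "continuous_on {0..} g"
  shows "fc P (\<lambda>x. f x - g x) = (\<lambda>v. fc P f v - fc P g v)"
proof -
  have cg': "continuous_on {0..} (\<lambda>x. (-1) * g x)" by (intro continuous_intros cg)
  have "fc P (\<lambda>x. f x - g x) = fc P (\<lambda>x. f x + (-1) * g x)" by simp
  also have "\<dots> = (\<lambda>v. fc P f v + fc P (\<lambda>x. (-1) * g x) v)" by (rule fc_add[OF P cf cg'])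
  also have "\<dots> = (\<lambda>v. fc P f v + complex_of_real (-1) *\<^sub>C fc P g v)"
    by (simp only: fc_smult[OF P cg])
  also have "\<dots> = (\<lambda>v. fc P f v - fc P g v)"
    by (simp add: scaleC_minus_left)
  finally show ?thesis .
qed

lemma fc_mult:
  assumes P: "posop P" and cf: "continuous_on {0..} f" and cg: "continuous_on {0..} g"
  shows "fc P (\<lambda>x. f x * g x) = (\<lambda>v. fc P f (fc P g v))"
proof -
  have B: "bounded_clinear P" by (rule posop_bcl[OF P])
  define ps where "ps = apx P f"
  define qs where "qs = apx P g"
  have a: "unif ps f (onorm P)" unfolding ps_def by (rule apx_unif[OF cf])
  have b: "unif qs g (onorm P)" unfolding qs_def by (rule apx_unif[OF cg])
  have cfg: "continuous_on {0..} (\<lambda>x. f x * g x)" by (intro continuous_intros cf cg)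
  have u: "unif (\<lambda>n. ps n * qs n) (\<lambda>x. f x * g x) (onorm P)"
    by (rule unif_mult[OF a b cont_Icc[OF cf] cont_Icc[OF cg]])
  obtain Mf where Mf: "\<forall>x\<in>{0..onorm P}. \<bar>f x\<bar> \<le> Mf" using bounded_on_Icc[OF cont_Icc[OF cf]] by blast
  obtain N0 where N0: "\<forall>n\<ge>N0. \<forall>x\<in>{0..onorm P}. \<bar>poly (ps n) x - f x\<bar> < 1"
    using a unfolding unif_def by (meson zero_less_one)
  have K: "norm (poly_op (ps (n + N0)) P v) \<le> (\<bar>Mf\<bar> + 1) * norm v" for n v
  proof (rule poly_op_norm_bound[OF P])
    fix x assume x: "0 \<le> x" "x \<le> onorm P"
    have "\<bar>poly (ps (n + N0)) x - f x\<bar> < 1" using N0 x by auto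
    moreover have "\<bar>f x\<bar> \<le> \<bar>Mf\<bar>"
    proof -
      have "\<bar>f x\<bar> \<le> Mf" using Mf x by auto
      then show ?thesis by linarith
    qed
    ultimately show "\<bar>poly (ps (n + N0)) x\<bar> \<le> \<bar>Mf\<bar> + 1" by linarith
  qed
  have A1: "opconv (\<lambda>n. poly_op (ps (n + N0)) P) (fc P f)"
    using opconv_shift2[OF fc_opconv[OF P cf a], of N0] by simp
  have A2: "opconv (\<lambda>n. poly_op (qs (n + N0)) P) (fc P g)"
    using opconv_shift2[OF fc_opconv[OF P cg b], of N0] by simp
  have "opconv (\<lambda>n v. poly_op (ps (n + N0)) P (poly_op (qs (n + N0)) P v)) (\<lambda>v. fc P f (fc P g v))"
    by (rule opconv_mult[OF A1 A2 fc_bcl[OF P cg] poly_op_bcl[OF B] K]) simp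
  then have "opconv (\<lambda>n v. poly_op (ps n) P (poly_op (qs n) P v)) (\<lambda>v. fc P f (fc P g v))"
    by (rule opconv_shift)
  moreover have "(\<lambda>n. poly_op (ps n * qs n) P) = (\<lambda>n v. poly_op (ps n) P (poly_op (qs n) P v))"
    by (simp add: fun_eq_iff poly_op_mult[OF B])
  ultimately have "opconv (\<lambda>n. poly_op (ps n * qs n) P) (\<lambda>v. fc P f (fc P g v))"
    by simp
  then show ?thesis by (rule opconv_unique[OF fc_opconv[OF P cfg u]])
qed

lemma fc_sa:
  assumes P: "posop P" and cf: "continuous_on {0..} f"
  shows "cinner (fc P f x) y = cinner x (fc P f y)"
proof -
  have h: "cmod (cinner (fc P f x) y - cinner x (fc P f y)) \<le> 0 + e * (2 * (norm x * norm y))" if e: "0 < e" for e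
  proof -
    obtain N where N: "\<forall>n\<ge>N. \<forall>v. norm (poly_op (apx P f n) P v - fc P f v) \<le> e * norm v"
      using opconvD[OF fc_opconv_apx[OF P cf] e] by blast
    define q where "q = poly_op (apx P f N) P"
    have qs: "cinner (q x) y = cinner x (q y)" unfolding q_def by (rule poly_op_sa[OF P])
    have "cinner (fc P f x) y - cinner x (fc P f y) = cinner (fc P f x - q x) y + cinner x (q y - fc P f y)"
      using qs by (simp add: cinner_diff_left cinner_diff_right)
    then have "cmod (cinner (fc P f x) y - cinner x (fc P f y)) \<le> cmod (cinner (fc P f x - q x) y) + cmod (cinner x (q y - fc P f y))"
      by (metis norm_triangle_ineq)
    also have "\<dots> \<le> norm (fc P f x - q x) * norm y + norm x * norm (q y - fc P f y)"
      by (intro add_mono cauchy_schwarz)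
    also have "\<dots> \<le> (e * norm x) * norm y + norm x * (e * norm y)"
    proof (intro add_mono mult_right_mono mult_left_mono)
      show "norm (fc P f x - q x) \<le> e * norm x" using N unfolding q_def by (metis norm_minus_commute order_refl)
      show "norm (q y - fc P f y) \<le> e * norm y" using N unfolding q_def by blast
    qed auto
    finally show ?thesis by (simp add: algebra_simps)
  qed
  have k: "0 \<le> 2 * (norm x * norm y)" by simp
  have "cmod (cinner (fc P f x) y - cinner x (fc P f y)) \<le> 0" by (rule le_of_forall_eps[OF h k])
  then show ?thesis by simp
qed

lemma fc_pos:
  assumes P: "posop P" and cf: "continuous_on {0..} f" and nn: "\<And>x. 0 \<le> x \<Longrightarrow> 0 \<le> f x"
  shows "0 \<le> Re (cinner (fc P f v) v)"
proof -
  have h: "0 \<le> Re (cinner (fc P f v) v) + e * (2 * (norm v)\<^sup>2)" if e: "0 < e" for e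
  proof -
    define ps where "ps = apx P f"
    obtain N1 where N1: "\<forall>n\<ge>N1. \<forall>x\<in>{0..onorm P}. \<bar>poly (ps n) x - f x\<bar> < e"
      using apx_unif[OF cf] e unfolding unif_def ps_def by blast
    obtain N2 where N2: "\<forall>n\<ge>N2. \<forall>v. norm (poly_op (ps n) P v - fc P f v) \<le> e * norm v"
      using opconvD[OF fc_opconv_apx[OF P cf] e] unfolding ps_def by blast
    define n where "n = max N1 N2"
    have "0 \<le> Re (cinner (poly_op (ps n + [:e:]) P v) v)"
    proof (rule poly_op_pos[OF P])
      fix x assume x: "0 \<le> x" "x \<le> onorm P"
      have "\<bar>poly (ps n) x - f x\<bar> < e" using N1 x by (auto simp: n_def)
      then show "0 \<le> poly (ps n + [:e:]) x" using nn[OF x(1)] by simp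
    qed
    then have a: "0 \<le> Re (cinner (poly_op (ps n) P v) v) + e * (norm v)\<^sup>2"
      by (simp add: poly_op_add poly_op_const cinner_add_left cinner_scaleC_left Re_cinner_self)
    have "Re (cinner (poly_op (ps n) P v - fc P f v) v) \<le> cmod (cinner (poly_op (ps n) P v - fc P f v) v)"
      by (rule complex_Re_le_cmod)
    also have "\<dots> \<le> norm (poly_op (ps n) P v - fc P f v) * norm v" by (rule cauchy_schwarz)
    also have "\<dots> \<le> (e * norm v) * norm v" using N2 by (intro mult_right_mono) (auto simp: n_def)
    finally have b: "Re (cinner (poly_op (ps n) P v) v) - Re (cinner (fc P f v) v) \<le> e * (norm v)\<^sup>2"
      by (simp add: cinner_diff_left power2_eq_square mult.assoc)
    from a b show ?thesis by (simp add: algebra_simps)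
  qed
  have k: "0 \<le> 2 * (norm v)\<^sup>2" by simp
  show ?thesis by (rule le_of_forall_eps[OF h k])
qed

lemma fc_norm:
  assumes P: "posop P" and cf: "continuous_on {0..} f" and bd: "\<And>x. 0 \<le> x \<Longrightarrow> x \<le> onorm P \<Longrightarrow> \<bar>f x\<bar> \<le> M"
  shows "norm (fc P f v) \<le> M * norm v"
proof -
  have h: "norm (fc P f v) \<le> M * norm v + e * (2 * norm v)" if e: "0 < e" for e
  proof -
    define ps where "ps = apx P f"
    obtain N1 where N1: "\<forall>n\<ge>N1. \<forall>x\<in>{0..onorm P}. \<bar>poly (ps n) x - f x\<bar> < e"
      using apx_unif[OF cf] e unfolding unif_def ps_def by blast
    obtain N2 where N2: "\<forall>n\<ge>N2. \<forall>v. norm (poly_op (ps n) P v - fc P f v) \<le> e * norm v"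
      using opconvD[OF fc_opconv_apx[OF P cf] e] unfolding ps_def by blast
    define n where "n = max N1 N2"
    have a: "norm (poly_op (ps n) P v) \<le> (M + e) * norm v"
    proof (rule poly_op_norm_bound[OF P])
      fix x assume x: "0 \<le> x" "x \<le> onorm P"
      have "\<bar>poly (ps n) x - f x\<bar> < e" using N1 x by (auto simp: n_def)
      then show "\<bar>poly (ps n) x\<bar> \<le> M + e" using bd[OF x] by linarith
    qed
    have b: "norm (poly_op (ps n) P v - fc P f v) \<le> e * norm v" using N2 by (auto simp: n_def)
    have "norm (fc P f v) \<le> norm (poly_op (ps n) P v) + norm (poly_op (ps n) P v - fc P f v)"
      using norm_triangle_ineq4[of "poly_op (ps n) P v" "poly_op (ps n) P v - fc P f v"] by simp
    then show ?thesis using a b by (simp add: algebra_simps)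
  qed
  have k: "0 \<le> 2 * norm v" by simp
  show ?thesis by (rule le_of_forall_eps[OF h k])
qed

lemma fc_posop:
  assumes P: "posop P" and cf: "continuous_on {0..} f" and nn: "\<And>x. 0 \<le> x \<Longrightarrow> 0 \<le> f x"
  shows "posop (fc P f)"
  unfolding posop_def using fc_bcl[OF P cf] fc_sa[OF P cf] fc_pos[OF P cf nn] by blast

lemma fc_id: assumes P: "posop P" shows "fc P (\<lambda>x. x) = P"
proof -
  have "fc P (\<lambda>x. x) = fc P (poly [:0, 1:])" by (rule arg_cong[where f="fc P"]) (simp add: fun_eq_iff)
  also have "\<dots> = poly_op [:0, 1:] P" by (rule fc_poly[OF P])
  also have "\<dots> = P" by (simp add: fun_eq_iff poly_op_x[OF posop_bcl[OF P]])
  finally show ?thesis .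
qed

lemma fc_const: assumes P: "posop P" shows "fc P (\<lambda>x. c) = (\<lambda>v. complex_of_real c *\<^sub>C v)"
proof -
  have "fc P (\<lambda>x. c) = fc P (poly [:c:])" by (rule arg_cong[where f="fc P"]) (simp add: fun_eq_iff)
  also have "\<dots> = poly_op [:c:] P" by (rule fc_poly[OF P])
  also have "\<dots> = (\<lambda>v. complex_of_real c *\<^sub>C v)" by (simp add: fun_eq_iff poly_op_const)
  finally show ?thesis .
qed

lemma fc_mono:
  assumes P: "posop P" and cf: "continuous_on {0..} f" and cg: "continuous_on {0..} g"
    and le: "\<And>x. 0 \<le> x \<Longrightarrow> f x \<le> g x"
  shows "Re (cinner (fc P f v) v) \<le> Re (cinner (fc P g v) v)"
proof -
  have c: "continuous_on {0..} (\<lambda>x. g x - f x)" by (intro continuous_intros cf cg)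
  have "0 \<le> Re (cinner (fc P (\<lambda>x. g x - f x) v) v)" by (rule fc_pos[OF P c]) (use le in simp)
  then show ?thesis by (simp add: fc_diff[OF P cg cf] cinner_diff_left)
qed

lemma cont_fpow: "0 \<le> t \<Longrightarrow> continuous_on {0..} (fpow t)"
proof (cases "t = 0")
  case True
  then have "fpow t = (\<lambda>x. 1)" by (simp add: fun_eq_iff fpow_def)
  then show ?thesis by simp
next
  case False
  assume t: "0 \<le> t"
  then have "fpow t = (\<lambda>x. x powr t)" using False by (simp add: fun_eq_iff fpow_def)
  moreover have "continuous_on {0..} (\<lambda>x::real. x powr t)"
    by (rule continuous_on_powr') (use t False in auto)
  ultimately show ?thesis by simp
qed

lemma op_pow_fc:
  assumes P: "posop P" and t: "0 \<le> t"
  shows "op_pow P t = fc P (fpow t)"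
proof -
  have cf: "continuous_on {0..} (fpow t)" by (rule cont_fpow[OF t])
  show ?thesis unfolding op_pow_def
  proof (rule the_equality)
  show "bounded_clinear (fc P (fpow t)) \<and>
    (\<forall>ps. (\<forall>e>0. \<exists>N. \<forall>n\<ge>N. \<forall>x\<in>{0..onorm P}. \<bar>poly (ps n) x - fpow t x\<bar> < e) \<longrightarrow>
          (\<lambda>n. onorm (\<lambda>v. poly_op (ps n) P v - fc P (fpow t) v)) \<longlonglongrightarrow> 0)"
  proof (intro conjI allI impI)
    show "bounded_clinear (fc P (fpow t))" by (rule fc_bcl[OF P cf])
    fix ps :: "nat \<Rightarrow> real poly"
    assume "\<forall>e>0. \<exists>N. \<forall>n\<ge>N. \<forall>x\<in>{0..onorm P}. \<bar>poly (ps n) x - fpow t x\<bar> < e"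
    then have u: "unif ps (fpow t) (onorm P)" by (simp add: unif_def)
    show "(\<lambda>n. onorm (\<lambda>v. poly_op (ps n) P v - fc P (fpow t) v)) \<longlonglongrightarrow> 0"
      by (rule opconv_onorm[OF fc_opconv[OF P cf u] bcl_diff_op[OF poly_op_bcl[OF posop_bcl[OF P]] fc_bcl[OF P cf]]])
  qed
  next
    fix Q assume Q: "bounded_clinear Q \<and>
      (\<forall>ps. (\<forall>e>0. \<exists>N. \<forall>n\<ge>N. \<forall>x\<in>{0..onorm P}. \<bar>poly (ps n) x - fpow t x\<bar> < e) \<longrightarrow>
            (\<lambda>n. onorm (\<lambda>v. poly_op (ps n) P v - Q v)) \<longlonglongrightarrow> 0)"
    have u: "unif (apx P (fpow t)) (fpow t) (onorm P)" by (rule apx_unif[OF cf])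
    then have l: "(\<lambda>n. onorm (\<lambda>v. poly_op (apx P (fpow t) n) P v - Q v)) \<longlonglongrightarrow> 0"
      using Q unfolding unif_def by blast
    have "opconv (\<lambda>n. poly_op (apx P (fpow t) n) P) Q"
      by (rule onorm_opconv[OF bcl_diff_op[OF poly_op_bcl[OF posop_bcl[OF P]]] l]) (use Q in blast)
    then show "Q = fc P (fpow t)" by (rule opconv_unique[OF _ fc_opconv[OF P cf u]])
  qed
qed



section \<open>Intertwining\<close>

lemma posop_CCstar:
  fixes C :: "'a::chilbert_space \<Rightarrow> 'b::chilbert_space"
  assumes C: "bounded_clinear C"
  shows "posop (C \<circ> adj C)"
  using posop_AstarA[OF adj_bcl[OF C]] by (simp add: adj_adj[OF C])

lemma poly_intertwine:
  fixes C :: "'a::chilbert_space \<Rightarrow> 'b::chilbert_space"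
  assumes C: "bounded_clinear C"
  shows "C (poly_op p (adj C \<circ> C) v) = poly_op p (C \<circ> adj C) (C v)"
proof (induct p arbitrary: v)
  case 0 then show ?case by (simp add: bcl_zero[OF C])
next
  case (pCons a p)
  have BP: "bounded_clinear (adj C \<circ> C)" by (rule posop_bcl[OF posop_AstarA[OF C]])
  have BR: "bounded_clinear (C \<circ> adj C)" by (rule posop_bcl[OF posop_CCstar[OF C]])
  have "C (poly_op (pCons a p) (adj C \<circ> C) v) = complex_of_real a *\<^sub>C C v + C (adj C (C (poly_op p (adj C \<circ> C) v)))"
    by (simp add: poly_op_pCons[OF BP] bcl_linear[OF C] bcl_scaleC[OF C])
  also have "\<dots> = complex_of_real a *\<^sub>C C v + C (adj C (poly_op p (C \<circ> adj C) (C v)))"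
    by (simp only: pCons(2))
  also have "\<dots> = poly_op (pCons a p) (C \<circ> adj C) (C v)"
    by (simp only: poly_op_pCons[OF BR] comp_apply)
  finally show ?case .
qed

lemma fc_intertwine:
  fixes C :: "'a::chilbert_space \<Rightarrow> 'b::chilbert_space"
  assumes C: "bounded_clinear C" and cf: "continuous_on {0..} f"
  shows "C (fc (adj C \<circ> C) f v) = fc (C \<circ> adj C) f (C v)"
proof -
  define P where "P = adj C \<circ> C"
  define R where "R = C \<circ> adj C"
  have PP: "posop P" unfolding P_def by (rule posop_AstarA[OF C])
  have PR: "posop R" unfolding R_def by (rule posop_CCstar[OF C])
  obtain ps where ps: "unif ps f (max (onorm P) (onorm R))"
    using weierstrass[OF cont_Icc[OF cf]] by blast
  have a: "unif ps f (onorm P)" by (rule unif_mono[OF ps]) simp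
  have b: "unif ps f (onorm R)" by (rule unif_mono[OF ps]) simp
  have l1: "opconv (\<lambda>n v. C (poly_op (ps n) P v)) (\<lambda>v. C (fc P f v))"
    by (rule opconv_compose_left[OF fc_opconv[OF PP cf a] C])
  have l2: "opconv (\<lambda>n v. poly_op (ps n) R (C v)) (\<lambda>v. fc R f (C v))"
    by (rule opconv_compose_right[OF fc_opconv[OF PR cf b] C])
  have "(\<lambda>n v. C (poly_op (ps n) P v)) = (\<lambda>n v. poly_op (ps n) R (C v))"
    unfolding P_def R_def by (simp add: fun_eq_iff poly_intertwine[OF C])
  then have "(\<lambda>v. C (fc P f v)) = (\<lambda>v. fc R f (C v))"
    using l1 l2 opconv_unique by metis
  then show ?thesis unfolding P_def R_def by metis
qed

lemma fpow_nonneg: "0 \<le> x \<Longrightarrow> 0 \<le> fpow t x"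
  by (simp add: fpow_def)

lemma fpow_pos: "0 < x \<Longrightarrow> fpow t x = x powr t"
  by (simp add: fpow_def)

lemma fpow_zero_pos: "t \<noteq> 0 \<Longrightarrow> fpow t 0 = 0"
  by (simp add: fpow_def)

lemma cont_compose_fpow:
  assumes cg: "continuous_on {0..} g" and t: "0 \<le> t"
  shows "continuous_on {0..} (\<lambda>x. g (fpow t x))"
  by (rule continuous_on_compose2[OF cg cont_fpow[OF t]]) (auto simp: fpow_nonneg)

lemma fc_half_comp:
  assumes P: "posop P" and cg: "continuous_on {0..} g"
  shows "fc (fc P (fpow (1/2))) g = fc P (\<lambda>x. g (fpow (1/2) x))"
proof -
  define h where "h = fpow (1/2)"
  have ch: "continuous_on {0..} h" unfolding h_def by (rule cont_fpow) simp
  have h0: "0 \<le> h x" if "0 \<le> x" for x unfolding h_def using that by (rule fpow_nonneg)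
  have hs: "h x = sqrt x" if "0 \<le> x" for x
    using that by (simp add: h_def fpow_def powr_half_sqrt)
  define S where "S = fc P h"
  have PS: "posop S" unfolding S_def by (rule fc_posop[OF P ch h0])
  have BS: "bounded_clinear S" by (rule posop_bcl[OF PS])
  have chh: "continuous_on {0..} (\<lambda>x. h x * h x)" by (intro continuous_intros ch)
  have PSS: "P v = S (S v)" for v
  proof -
    have "fc P (\<lambda>x. h x * h x) = fc P (\<lambda>x. x)"
      by (rule fc_cong[OF P chh continuous_on_id]) (simp add: hs)
    then have "fc P (\<lambda>x. x) = (\<lambda>v. S (S v))" by (simp add: fc_mult[OF P ch ch] S_def)
    then show ?thesis by (simp add: fc_id[OF P])
  qed
  have S0: "0 \<le> onorm S" by (rule bcl_onorm_nonneg[OF BS])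
  have nP: "onorm P \<le> (onorm S)\<^sup>2"
  proof (rule onorm_bound)
    show "0 \<le> (onorm S)\<^sup>2" by simp
    fix v
    have "norm (P v) = norm (S (S v))" by (simp add: PSS)
    also have "\<dots> \<le> onorm S * norm (S v)" by (rule bcl_onorm[OF BS])
    also have "\<dots> \<le> onorm S * (onorm S * norm v)" by (intro mult_left_mono bcl_onorm[OF BS] S0)
    finally show "norm (P v) \<le> (onorm S)\<^sup>2 * norm v" by (simp add: power2_eq_square mult.assoc)
  qed
  have hb: "h x \<le> onorm S" if "0 \<le> x" "x \<le> onorm P" for x
  proof -
    have "sqrt x \<le> sqrt ((onorm S)\<^sup>2)" using that nP by (intro real_sqrt_le_mono) simp
    then show ?thesis using hs[OF that(1)] S0 by simp
  qed
  have cq: "continuous_on {0..} (\<lambda>x. poly q (h x))" for q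
    by (rule continuous_on_compose2[OF cont_poly ch]) auto
  have polyS: "poly_op q S v = fc P (\<lambda>x. poly q (h x)) v" for q v
  proof (induct q arbitrary: v)
    case 0
    have "fc P (\<lambda>x. poly 0 (h x)) = fc P (\<lambda>x. 0)" by simp
    then show ?case by (simp add: fc_const[OF P])
  next
    case (pCons a q)
    have c1: "continuous_on {0..} (\<lambda>x. a)" by simp
    have c2: "continuous_on {0..} (\<lambda>x. h x * poly q (h x))" by (intro continuous_intros ch cq)
    have "poly_op (pCons a q) S v = complex_of_real a *\<^sub>C v + S (fc P (\<lambda>x. poly q (h x)) v)"
      by (simp add: poly_op_pCons[OF BS] pCons(2))
    also have "S (fc P (\<lambda>x. poly q (h x)) v) = fc P (\<lambda>x. h x * poly q (h x)) v"
      by (simp add: S_def fc_mult[OF P ch cq])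
    also have "complex_of_real a *\<^sub>C v = fc P (\<lambda>x. a) v" by (simp add: fc_const[OF P])
    also have "fc P (\<lambda>x. a) v + fc P (\<lambda>x. h x * poly q (h x)) v = fc P (\<lambda>x. a + h x * poly q (h x)) v"
      by (simp add: fc_add[OF P c1 c2])
    finally show ?case by simp
  qed
  have cgh: "continuous_on {0..} (\<lambda>x. g (h x))" unfolding h_def by (rule cont_compose_fpow[OF cg]) simp
  define ps where "ps = apx S g"
  have u: "unif ps g (onorm S)" unfolding ps_def by (rule apx_unif[OF cg])
  have "opconv (\<lambda>n. poly_op (ps n) S) (fc P (\<lambda>x. g (h x)))"
    unfolding opconv_def
  proof (intro allI impI)
    fix e :: real assume e: "0 < e"
    obtain N where N: "\<forall>n\<ge>N. \<forall>y\<in>{0..onorm S}. \<bar>poly (ps n) y - g y\<bar> < e" using u e unfolding unif_def by blast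
    show "\<exists>N. \<forall>n\<ge>N. \<forall>v. norm (poly_op (ps n) S v - fc P (\<lambda>x. g (h x)) v) \<le> e * norm v"
    proof (intro exI[of _ N] allI impI)
      fix n v assume n: "N \<le> n"
      have "poly_op (ps n) S v - fc P (\<lambda>x. g (h x)) v = fc P (\<lambda>x. poly (ps n) (h x) - g (h x)) v"
        by (simp add: polyS fc_diff[OF P cq cgh])
      also have "norm \<dots> \<le> e * norm v"
      proof (rule fc_norm[OF P])
        show "continuous_on {0..} (\<lambda>x. poly (ps n) (h x) - g (h x))" by (intro continuous_intros cq cgh)
        fix x assume x: "0 \<le> x" "x \<le> onorm P"
        have "h x \<in> {0..onorm S}" using h0[OF x(1)] hb[OF x] by simp
        then show "\<bar>poly (ps n) (h x) - g (h x)\<bar> \<le> e" using N n by (meson less_imp_le)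
      qed
      finally show "norm (poly_op (ps n) S v - fc P (\<lambda>x. g (h x)) v) \<le> e * norm v" .
    qed
  qed
  moreover have "opconv (\<lambda>n. poly_op (ps n) S) (fc S g)" unfolding ps_def by (rule fc_opconv_apx[OF PS cg])
  ultimately show ?thesis unfolding S_def h_def using opconv_unique by metis
qed

lemma op_pow_half:
  assumes P: "posop P" and t: "0 \<le> t"
  shows "op_pow (op_pow P (1/2)) t = fc P (fpow (t/2))"
proof -
  have Ph: "posop (fc P (fpow (1/2)))"
    by (rule fc_posop[OF P cont_fpow fpow_nonneg]) simp_all
  have "op_pow (op_pow P (1/2)) t = fc (fc P (fpow (1/2))) (fpow t)"
    by (simp add: op_pow_fc[OF P] op_pow_fc[OF Ph t])
  also have "\<dots> = fc P (\<lambda>x. fpow t (fpow (1/2) x))" by (rule fc_half_comp[OF P cont_fpow[OF t]])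
  also have "\<dots> = fc P (fpow (t/2))"
  proof (rule fc_cong[OF P])
    show "continuous_on {0..} (\<lambda>x. fpow t (fpow (1 / 2) x))" by (rule cont_compose_fpow[OF cont_fpow[OF t]]) simp
    show "continuous_on {0..} (fpow (t / 2))" by (rule cont_fpow) (use t in simp)
    fix x :: real assume x: "0 \<le> x"
    show "fpow t (fpow (1 / 2) x) = fpow (t / 2) x"
      using x by (simp add: fpow_def powr_powr)
  qed
  finally show ?thesis .
qed



section \<open>Hoelder--McCarthy inequality\<close>

lemma fpow_mult_powr:
  assumes "0 \<le> x" "0 \<le> s" "1 \<le> p"
  shows "fpow (s * p) x = (fpow s x) powr p"
  using assms by (cases "s = 0") (simp_all add: fpow_def powr_powr)

lemma mccarthy:
  assumes P: "posop P" and s: "0 \<le> s" and p: "1 \<le> p" and y: "norm y = 1"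
  shows "(Re (cinner (fc P (fpow s) y) y)) powr p \<le> Re (cinner (fc P (fpow (s * p)) y) y)"
proof -
  define c where "c = Re (cinner (fc P (fpow s) y) y)"
  have sp: "0 \<le> s * p" using s p by simp
  have cs: "continuous_on {0..} (fpow s)" by (rule cont_fpow[OF s])
  have csp: "continuous_on {0..} (fpow (s * p))" by (rule cont_fpow[OF sp])
  have c0: "0 \<le> c" unfolding c_def by (rule fc_pos[OF P cs fpow_nonneg])
  have R0: "0 \<le> Re (cinner (fc P (fpow (s * p)) y) y)" by (rule fc_pos[OF P csp fpow_nonneg])
  show ?thesis
  proof (cases "c = 0")
    case True
    then show ?thesis using R0 p unfolding c_def[symmetric] by simp
  next
    case False
    then have cp: "0 < c" using c0 by simp
    define B where "B = p * c powr (p - 1)"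
    define A where "A = c powr p - B * c"
    have ineq: "A + B * fpow s x \<le> fpow (s * p) x" if x: "0 \<le> x" for x
    proof -
      have fx: "fpow (s * p) x = (fpow s x) powr p" by (rule fpow_mult_powr[OF x s p])
      have "c powr p + B * (fpow s x - c) \<le> (fpow s x) powr p"
        unfolding B_def by (rule tangent_powr[OF p fpow_nonneg[OF x] cp])
      then show ?thesis unfolding fx A_def by (simp add: algebra_simps)
    qed
    have cB: "continuous_on {0..} (\<lambda>x. B * fpow s x)" by (intro continuous_intros cs)
    have cA: "continuous_on {0..} (\<lambda>x. A + B * fpow s x)" by (intro continuous_intros cs)
    have mono: "Re (cinner (fc P (\<lambda>x. A + B * fpow s x) y) y) \<le> Re (cinner (fc P (fpow (s * p)) y) y)"
      by (rule fc_mono[OF P cA csp ineq])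
    have "fc P (\<lambda>x. A + B * fpow s x) y = complex_of_real A *\<^sub>C y + complex_of_real B *\<^sub>C fc P (fpow s) y"
      by (simp add: fc_add[OF P continuous_on_const cB] fc_const[OF P] fc_smult[OF P cs])
    then have "Re (cinner (fc P (\<lambda>x. A + B * fpow s x) y) y) = A + B * c"
      using y by (simp add: cinner_add_left cinner_scaleC_left cinner_self c_def)
    also have "A + B * c = c powr p" by (simp add: A_def)
    finally show ?thesis using mono unfolding c_def by simp
  qed
qed

section \<open>Mixed Schwarz inequality\<close>

lemma mixed_schwarz:
  fixes C :: "'a::chilbert_space \<Rightarrow> 'b::chilbert_space"
  assumes C: "bounded_clinear C" and a0: "0 \<le> \<alpha>" and a1: "\<alpha> \<le> 1"
  shows "(cmod (cinner (C x) y))\<^sup>2 \<le> Re (cinner (fc (adj C \<circ> C) (fpow \<alpha>) x) x) * Re (cinner (fc (C \<circ> adj C) (fpow (1 - \<alpha>)) y) y)"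
proof -
  define P where "P = adj C \<circ> C"
  define R where "R = C \<circ> adj C"
  have PP: "posop P" unfolding P_def by (rule posop_AstarA[OF C])
  have PR: "posop R" unfolding R_def by (rule posop_CCstar[OF C])
  have BP: "bounded_clinear P" by (rule posop_bcl[OF PP])
  have BR: "bounded_clinear R" by (rule posop_bcl[OF PR])
  have cfa: "continuous_on {0..} (fpow \<alpha>)" by (rule cont_fpow[OF a0])
  have cfb: "continuous_on {0..} (fpow (1 - \<alpha>))" by (rule cont_fpow) (use a1 in simp)
  define U where "U = Re (cinner (fc P (fpow \<alpha>) x) x)"
  define V where "V = Re (cinner (fc R (fpow (1 - \<alpha>)) y) y)"
  have U0: "0 \<le> U" unfolding U_def by (rule fc_pos[OF PP cfa fpow_nonneg])
  have V0: "0 \<le> V" unfolding V_def by (rule fc_pos[OF PR cfb fpow_nonneg])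
  have key: "cmod (cinner (C x) y) \<le> sqrt (U * V) + e * (norm x * norm y)" if e: "0 < e" for e
  proof -
    define \<epsilon> where "\<epsilon> = e\<^sup>2"
    have \<epsilon>: "0 < \<epsilon>" using e by (simp add: \<epsilon>_def)
    define g where "g = (\<lambda>t::real. t / (t + \<epsilon>))"
    define n where "n = (\<lambda>t::real. fpow (1 - \<alpha>/2) t / (t + \<epsilon>))"
    define a where "a = fpow (\<alpha>/2)"
    define hf where "hf = (\<lambda>t::real. \<epsilon> / (t + \<epsilon>))"
    have den: "\<forall>t\<in>{0..}. t + \<epsilon> \<noteq> 0" using \<epsilon> by auto
    have cden: "continuous_on {0..} (\<lambda>t::real. t + \<epsilon>)" by (intro continuous_intros)
    have cg: "continuous_on {0..} g" unfolding g_def by (rule continuous_on_divide[OF continuous_on_id cden den])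
    have cn: "continuous_on {0..} n" unfolding n_def
      by (rule continuous_on_divide[OF cont_fpow cden den]) (use a1 in simp)
    have ca: "continuous_on {0..} a" unfolding a_def by (rule cont_fpow) (use a0 in simp)
    have chf: "continuous_on {0..} hf" unfolding hf_def by (rule continuous_on_divide[OF continuous_on_const cden den])
    have an: "n t * a t = g t" if t: "0 \<le> t" for t
    proof (cases "t = 0")
      case True
      have "fpow (1 - \<alpha>/2) 0 = 0" by (rule fpow_zero_pos) (use a1 in simp)
      then show ?thesis using True by (simp add: n_def g_def)
    next
      case False
      then have tp: "0 < t" using t by simp
      have "t powr (1 - \<alpha>/2) * t powr (\<alpha>/2) = t powr ((1 - \<alpha>/2) + \<alpha>/2)" by (rule powr_add[symmetric])
      also have "\<dots> = t powr 1" by (rule arg_cong[where f="\<lambda>u. t powr u"]) simp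
      also have "\<dots> = t" using tp by simp
      finally have pw: "t powr (1 - \<alpha>/2) * t powr (\<alpha>/2) = t" .
      have "n t * a t = (t powr (1 - \<alpha>/2) / (t + \<epsilon>)) * t powr (\<alpha>/2)"
        using tp by (simp only: n_def a_def fpow_pos)
      also have "\<dots> = (t powr (1 - \<alpha>/2) * t powr (\<alpha>/2)) / (t + \<epsilon>)" by (simp only: times_divide_eq_left)
      also have "\<dots> = g t" by (simp only: pw g_def)
      finally show ?thesis .
    qed
    have aa: "a t * a t = fpow \<alpha> t" if t: "0 \<le> t" for t
    proof (cases "t = 0")
      case True then show ?thesis by (cases "\<alpha> = 0") (simp_all add: a_def fpow_def)
    next
      case False
      then have tp: "0 < t" using t by simp
      have "t powr (\<alpha>/2) * t powr (\<alpha>/2) = t powr (\<alpha>/2 + \<alpha>/2)" by (rule powr_add[symmetric])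
      also have "\<dots> = t powr \<alpha>" by (rule arg_cong[where f="\<lambda>u. t powr u"]) simp
      finally have "t powr (\<alpha>/2) * t powr (\<alpha>/2) = t powr \<alpha>" .
      then show ?thesis using tp by (simp only: a_def fpow_pos)
    qed
    have nnt: "n t * n t * t \<le> fpow (1 - \<alpha>) t" if t: "0 \<le> t" for t
    proof (cases "t = 0")
      case True then show ?thesis by (simp add: fpow_nonneg)
    next
      case False
      then have tp: "0 < t" using t by simp
      have e1: "t powr (1 - \<alpha>/2) * t powr (1 - \<alpha>/2) * t = t powr (1 - \<alpha>) * (t * t)"
      proof -
        have t1: "t powr 1 = t" using tp by simp
        have "t powr (1 - \<alpha>/2) * t powr (1 - \<alpha>/2) * t = t powr ((1 - \<alpha>/2) + (1 - \<alpha>/2) + 1)"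
          by (simp only: powr_add t1)
        also have "\<dots> = t powr ((1 - \<alpha>) + 1 + 1)" by (rule arg_cong[where f="\<lambda>u. t powr u"]) simp
        also have "\<dots> = t powr (1 - \<alpha>) * (t * t)" by (simp only: powr_add t1 mult.assoc)
        finally show ?thesis .
      qed
      have d: "0 < t + \<epsilon>" using tp \<epsilon> by simp
      have "n t * n t * t = (t powr (1 - \<alpha>) * (t * t)) / ((t + \<epsilon>) * (t + \<epsilon>))"
        using tp e1[symmetric] by (simp add: n_def fpow_pos)
      also have "\<dots> \<le> t powr (1 - \<alpha>) * 1"
      proof -
        have q: "t * t / ((t + \<epsilon>) * (t + \<epsilon>)) \<le> 1"
          using d tp \<epsilon> by (simp add: mult_mono divide_le_eq_1)
        have "(t powr (1 - \<alpha>) * (t * t)) / ((t + \<epsilon>) * (t + \<epsilon>)) = t powr (1 - \<alpha>) * (t * t / ((t + \<epsilon>) * (t + \<epsilon>)))"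
          by simp
        also have "\<dots> \<le> t powr (1 - \<alpha>) * 1" by (rule mult_left_mono[OF q]) simp
        finally show ?thesis .
      qed
      finally show ?thesis using tp by (simp add: fpow_pos)
    qed
    have hft: "hf t * (t * hf t) \<le> \<epsilon> / 4" if t: "0 \<le> t" for t
    proof -
      have d: "0 < t + \<epsilon>" using t \<epsilon> by simp
      have k: "4 * \<epsilon> * t \<le> (t + \<epsilon>) * (t + \<epsilon>)"
      proof -
        have "(t + \<epsilon>) * (t + \<epsilon>) - 4 * \<epsilon> * t = (t - \<epsilon>) * (t - \<epsilon>)" by algebra
        moreover have "0 \<le> (t - \<epsilon>) * (t - \<epsilon>)" by simp
        ultimately show ?thesis by linarith
      qed
      have "hf t * (t * hf t) = (\<epsilon> / 4) * ((4 * \<epsilon> * t) / ((t + \<epsilon>) * (t + \<epsilon>)))"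
        by (simp add: hf_def)
      also have "\<dots> \<le> (\<epsilon> / 4) * 1"
        using k d \<epsilon> by (intro mult_left_mono) (simp_all add: divide_le_eq_1)
      finally show ?thesis by simp
    qed
    have gh: "hf t = 1 - g t" if t: "0 \<le> t" for t
    proof -
      have d: "0 < t + \<epsilon>" using t \<epsilon> by simp
      then show ?thesis by (simp add: hf_def g_def field_simps)
    qed
    define G where "G = fc P g"
    define Nn where "Nn = fc P n"
    define A where "A = fc P a"
    define H where "H = fc P hf"
    have GNA: "G v = Nn (A v)" for v
    proof -
      have "fc P g = fc P (\<lambda>t. n t * a t)"
        by (rule fc_cong[OF PP cg]) (use an cn ca in \<open>auto intro: continuous_intros\<close>)
      then show ?thesis by (simp add: G_def Nn_def A_def fc_mult[OF PP cn ca])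
    qed
    have Hx: "H v = v - G v" for v
    proof -
      have c1: "continuous_on {0..} (\<lambda>t::real. 1)" by simp
      have "fc P hf = fc P (\<lambda>t. 1 - g t)"
        by (rule fc_cong[OF PP chf]) (use gh cg in \<open>auto intro: continuous_intros\<close>)
      also have "\<dots> = (\<lambda>v. fc P (\<lambda>t. 1) v - fc P g v)" by (rule fc_diff[OF PP c1 cg])
      finally show ?thesis by (simp add: H_def G_def fc_const[OF PP])
    qed
    have normCH: "norm (C x - C (G x)) \<le> e / 2 * norm x"
    proof -
      have c2: "continuous_on {0..} (\<lambda>t::real. t * hf t)" by (intro continuous_intros chf)
      have c3: "continuous_on {0..} (\<lambda>t::real. hf t * (t * hf t))" by (intro continuous_intros chf)
      have eqf: "fc P (\<lambda>t. hf t * (t * hf t)) = (\<lambda>v. H (P (H v)))"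
        by (simp add: fc_mult[OF PP chf c2] fc_mult[OF PP continuous_on_id chf] fc_id[OF PP] H_def)
      have "C x - C (G x) = C (H x)" by (simp add: Hx bcl_diff[OF C])
      then have "(norm (C x - C (G x)))\<^sup>2 = Re (cinner (C (H x)) (C (H x)))" by (simp add: Re_cinner_self)
      also have "cinner (C (H x)) (C (H x)) = cinner (P (H x)) (H x)"
        by (simp add: P_def adj_prop2[OF C])
      also have "\<dots> = cinner (H (P (H x))) x"
        by (simp add: H_def fc_sa[OF PP chf])
      also have "\<dots> = cinner (fc P (\<lambda>t. hf t * (t * hf t)) x) x" by (simp add: eqf)
      also have "Re \<dots> \<le> Re (cinner (fc P (\<lambda>t. \<epsilon> / 4) x) x)"
        by (rule fc_mono[OF PP c3 continuous_on_const hft])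
      also have "\<dots> = \<epsilon> / 4 * (norm x)\<^sup>2"
        by (simp add: fc_const[OF PP] cinner_scaleC_left cinner_self)
      also have "\<dots> = (e / 2 * norm x)\<^sup>2" by (simp add: \<epsilon>_def power_mult_distrib power_divide)
      finally have "(norm (C x - C (G x)))\<^sup>2 \<le> (e / 2 * norm x)\<^sup>2" .
      then show ?thesis using e power2_le_imp_le[of "norm (C x - C (G x))" "e / 2 * norm x"] by simp
    qed
    have inner: "cinner (C (G x)) y = cinner (A x) (Nn (adj C y))"
    proof -
      have "cinner (C (G x)) y = cinner (Nn (A x)) (adj C y)" by (simp add: GNA adj_prop[OF C])
      also have "\<dots> = cinner (A x) (Nn (adj C y))" by (simp add: Nn_def fc_sa[OF PP cn])
      finally show ?thesis .
    qed
    have nA: "norm (A x) = sqrt U"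
    proof -
      have caa: "continuous_on {0..} (\<lambda>t. a t * a t)" by (intro continuous_intros ca)
      have F1: "fc P (\<lambda>t. a t * a t) = fc P (fpow \<alpha>)" by (rule fc_cong[OF PP caa cfa aa])
      have F2: "fc P (\<lambda>t. a t * a t) = (\<lambda>v. A (A v))" unfolding A_def by (rule fc_mult[OF PP ca ca])
      have "fc P (fpow \<alpha>) = (\<lambda>v. A (A v))" using F1 F2 by simp
      then have "fc P (fpow \<alpha>) x = A (A x)" by simp
      then have "U = Re (cinner (A x) (A x))" unfolding U_def by (simp add: A_def fc_sa[OF PP ca])
      then show ?thesis by (simp add: Re_cinner_self)
    qed
    have nN: "norm (Nn (adj C y)) \<le> sqrt V"
    proof -
      define w where "w = adj C y"
      have cnn: "continuous_on {0..} (\<lambda>t. n t * n t)" by (intro continuous_intros cn)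
      have cnnt: "continuous_on {0..} (\<lambda>t. n t * n t * t)" by (intro continuous_intros cn)
      have "(norm (Nn w))\<^sup>2 = Re (cinner (Nn w) (Nn w))" by (simp add: Re_cinner_self)
      also have "cinner (Nn w) (Nn w) = cinner (fc P (\<lambda>t. n t * n t) w) w"
        by (simp add: Nn_def fc_mult[OF PP cn cn] fc_sa[OF PP cn])
      also have "\<dots> = cinner (C (fc P (\<lambda>t. n t * n t) w)) y"
        by (simp add: w_def adj_prop[OF C])
      also have "\<dots> = cinner (fc R (\<lambda>t. n t * n t) (R y)) y"
        by (simp add: P_def R_def fc_intertwine[OF C cnn] w_def)
      also have "\<dots> = cinner (fc R (\<lambda>t. n t * n t * t) y) y"
        by (simp add: fc_mult[OF PR cnn continuous_on_id] fc_id[OF PR])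
      also have "Re \<dots> \<le> V" unfolding V_def by (rule fc_mono[OF PR cnnt cfb nnt])
      finally have "(norm (Nn w))\<^sup>2 \<le> V" .
      then have "sqrt ((norm (Nn w))\<^sup>2) \<le> sqrt V" by (rule real_sqrt_le_mono)
      then show ?thesis by (simp add: w_def)
    qed
    have "cmod (cinner (C x) y) \<le> cmod (cinner (C (G x)) y) + cmod (cinner (C x - C (G x)) y)"
    proof -
      have "cinner (C x) y = cinner (C (G x)) y + cinner (C x - C (G x)) y" by (simp add: cinner_diff_left)
      then show ?thesis by (metis norm_triangle_ineq)
    qed
    also have "cmod (cinner (C (G x)) y) \<le> sqrt U * sqrt V"
    proof -
      have "cmod (cinner (C (G x)) y) \<le> norm (A x) * norm (Nn (adj C y))" unfolding inner by (rule cauchy_schwarz)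
      also have "\<dots> \<le> sqrt U * sqrt V" unfolding nA by (intro mult_left_mono nN) (simp add: U0)
      finally show ?thesis .
    qed
    also have "cmod (cinner (C x - C (G x)) y) \<le> e / 2 * norm x * norm y"
    proof -
      have "cmod (cinner (C x - C (G x)) y) \<le> norm (C x - C (G x)) * norm y" by (rule cauchy_schwarz)
      also have "\<dots> \<le> e / 2 * norm x * norm y" by (intro mult_right_mono normCH) simp
      finally show ?thesis .
    qed
    also have "sqrt U * sqrt V + e / 2 * norm x * norm y \<le> sqrt (U * V) + e * (norm x * norm y)"
      using e by (simp add: real_sqrt_mult mult_nonneg_nonneg)
    finally show ?thesis by simp
  qed
  have k: "0 \<le> norm x * norm y" by simp
  have "cmod (cinner (C x) y) \<le> sqrt (U * V)" by (rule le_of_forall_eps[OF key k])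
  then have "(cmod (cinner (C x) y))\<^sup>2 \<le> (sqrt (U * V))\<^sup>2" by (intro power_mono) simp_all
  also have "\<dots> = U * V" using U0 V0 by simp
  finally show ?thesis unfolding U_def V_def P_def R_def .
qed



lemma fc_scaleR_inner:
  assumes P: "posop P" and cf: "continuous_on {0..} f"
  shows "Re (cinner (fc P f (complex_of_real c *\<^sub>C y)) (complex_of_real c *\<^sub>C y)) = c\<^sup>2 * Re (cinner (fc P f y) y)"
  by (simp add: bcl_scaleC[OF fc_bcl[OF P cf]] cinner_scaleC_left cinner_scaleC_right power2_eq_square)

lemma powr_root_le:
  fixes a b p :: real
  assumes a: "0 \<le> a" and p: "0 < p" and h: "a powr p \<le> b"
  shows "a \<le> b powr (1 / p)"
proof -
  have "a = (a powr p) powr (1 / p)" using a p by (simp add: powr_powr)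
  also have "\<dots> \<le> b powr (1 / p)" by (rule powr_mono2) (use p h in auto)
  finally show ?thesis .
qed

lemma half_bound:
  fixes Pa Ra :: "'a::chilbert_space \<Rightarrow> 'a"
  assumes Pa: "posop Pa" and Ra: "posop Ra" and a0: "0 \<le> \<alpha>" and a1: "\<alpha> \<le> 1" and r: "1 \<le> r"
  defines "M \<equiv> onorm (\<lambda>v. fc Pa (fpow (\<alpha> * (2 * r))) v + fc Ra (fpow ((1 - \<alpha>) * (2 * r))) v)"
  shows "(Re (cinner (fc Pa (fpow \<alpha>) z) z) + Re (cinner (fc Ra (fpow (1 - \<alpha>)) z) z)) / 2
     \<le> (norm z)\<^sup>2 * (M / 2) powr (1 / (2 * r))"
proof -
  have ca: "continuous_on {0..} (fpow \<alpha>)" by (rule cont_fpow[OF a0])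
  have cb: "continuous_on {0..} (fpow (1 - \<alpha>))" by (rule cont_fpow) (use a1 in simp)
  have ca2: "continuous_on {0..} (fpow (\<alpha> * (2 * r)))" by (rule cont_fpow) (use a0 r in simp)
  have cb2: "continuous_on {0..} (fpow ((1 - \<alpha>) * (2 * r)))" by (rule cont_fpow) (use a1 r in simp)
  have BX: "bounded_clinear (\<lambda>v. fc Pa (fpow (\<alpha> * (2 * r))) v + fc Ra (fpow ((1 - \<alpha>) * (2 * r))) v)"
    by (rule bcl_add[OF fc_bcl[OF Pa ca2] fc_bcl[OF Ra cb2]])
  have M0: "0 \<le> M" unfolding M_def by (rule bcl_onorm_nonneg[OF BX])
  show ?thesis
  proof (cases "z = 0")
    case True
    then show ?thesis by (simp add: bcl_zero[OF fc_bcl[OF Pa ca]] bcl_zero[OF fc_bcl[OF Ra cb]])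
  next
    case False
    define c where "c = norm z"
    have c0: "0 < c" using False by (simp add: c_def)
    define y where "y = complex_of_real (1 / c) *\<^sub>C z"
    have ny: "norm y = 1" using c0 by (simp add: y_def norm_scaleC c_def norm_divide)
    have zy: "z = complex_of_real c *\<^sub>C y" using c0 by (simp add: y_def)
    define u where "u = Re (cinner (fc Pa (fpow \<alpha>) y) y)"
    define v where "v = Re (cinner (fc Ra (fpow (1 - \<alpha>)) y) y)"
    have u0: "0 \<le> u" unfolding u_def by (rule fc_pos[OF Pa ca fpow_nonneg])
    have v0: "0 \<le> v" unfolding v_def by (rule fc_pos[OF Ra cb fpow_nonneg])
    have p: "1 \<le> 2 * r" using r by simp
    have "((u + v) / 2) powr (2 * r) \<le> (u powr (2 * r) + v powr (2 * r)) / 2"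
      by (rule convex_mid_powr[OF p u0 v0])
    also have "\<dots> \<le> (Re (cinner (fc Pa (fpow (\<alpha> * (2 * r))) y) y) + Re (cinner (fc Ra (fpow ((1 - \<alpha>) * (2 * r))) y) y)) / 2"
      unfolding u_def v_def
      by (intro divide_right_mono add_mono mccarthy[OF Pa a0 p ny] mccarthy[OF Ra _ p ny]) (use a1 in simp_all)
    also have "\<dots> = Re (cinner (fc Pa (fpow (\<alpha> * (2 * r))) y + fc Ra (fpow ((1 - \<alpha>) * (2 * r))) y) y) / 2"
      by (simp add: cinner_add_left)
    also have "\<dots> \<le> M / 2"
    proof -
      let ?w = "fc Pa (fpow (\<alpha> * (2 * r))) y + fc Ra (fpow ((1 - \<alpha>) * (2 * r))) y"
      have "Re (cinner ?w y) \<le> cmod (cinner ?w y)" by (rule complex_Re_le_cmod)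
      also have "\<dots> \<le> norm ?w * norm y" by (rule cauchy_schwarz)
      also have "\<dots> \<le> M * norm y * norm y"
        unfolding M_def using bcl_onorm[OF BX, of y] by (intro mult_right_mono) auto
      finally show ?thesis using ny by simp
    qed
    finally have pw: "((u + v) / 2) powr (2 * r) \<le> M / 2" .
    have uv: "(u + v) / 2 \<le> (M / 2) powr (1 / (2 * r))"
      by (rule powr_root_le[OF _ _ pw]) (use u0 v0 r in auto)
    have "(Re (cinner (fc Pa (fpow \<alpha>) z) z) + Re (cinner (fc Ra (fpow (1 - \<alpha>)) z) z)) / 2 = c\<^sup>2 * ((u + v) / 2)"
      unfolding zy by (simp add: fc_scaleR_inner[OF Pa ca] fc_scaleR_inner[OF Ra cb] u_def v_def algebra_simps)
    also have "\<dots> \<le> c\<^sup>2 * (M / 2) powr (1 / (2 * r))" by (intro mult_left_mono uv) simp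
    finally show ?thesis by (simp add: c_def)
  qed
qed

lemma amgm_bound:
  fixes c u v :: real
  assumes "c\<^sup>2 \<le> u * v" "0 \<le> c" "0 \<le> u" "0 \<le> v"
  shows "c \<le> (u + v) / 2"
proof -
  have "u * v \<le> ((u + v) / 2)\<^sup>2"
  proof -
    have "((u + v) / 2)\<^sup>2 - u * v = ((u - v) / 2)\<^sup>2" by (simp add: power2_eq_square field_simps)
    moreover have "0 \<le> ((u - v) / 2)\<^sup>2" by simp
    ultimately show ?thesis by linarith
  qed
  then have "c\<^sup>2 \<le> ((u + v) / 2)\<^sup>2" using assms(1) by linarith
  then show ?thesis using assms power2_le_imp_le[of c "(u + v) / 2"] by simp
qed

theorem mainTheorem3:
  fixes B :: "'b::chilbert_space \<Rightarrow> 'a::chilbert_space"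
    and C :: "'a \<Rightarrow> 'b"
    and r \<alpha> :: real
  assumes "bounded_clinear B" and "bounded_clinear C"
    and "1 \<le> r" and "0 \<le> \<alpha>" and "\<alpha> \<le> 1"
  shows "nrad (\<lambda>(x, y). (B y, C x)) powr (2 * r)
    \<le> 1/2 * max
        (onorm (\<lambda>v. op_pow (absop C) (4 * r * \<alpha>) v + op_pow (absop (adj B)) (4 * r * (1 - \<alpha>)) v))
        (onorm (\<lambda>v. op_pow (absop B) (4 * r * \<alpha>) v + op_pow (absop (adj C)) (4 * r * (1 - \<alpha>)) v))"
proof -
  note Bb = assms(1) and Cb = assms(2) and r = assms(3) and a0 = assms(4) and a1 = assms(5)
  define P1 where "P1 = adj C \<circ> C"
  define R1 where "R1 = C \<circ> adj C"
  define P2 where "P2 = adj B \<circ> B"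
  define R2 where "R2 = B \<circ> adj B"
  have PP1: "posop P1" unfolding P1_def by (rule posop_AstarA[OF Cb])
  have PR1: "posop R1" unfolding R1_def by (rule posop_CCstar[OF Cb])
  have PP2: "posop P2" unfolding P2_def by (rule posop_AstarA[OF Bb])
  have PR2: "posop R2" unfolding R2_def by (rule posop_CCstar[OF Bb])
  have e1: "4 * r * \<alpha> / 2 = \<alpha> * (2 * r)" by simp
  have e2: "4 * r * (1 - \<alpha>) / 2 = (1 - \<alpha>) * (2 * r)" by simp
  have t1: "0 \<le> 4 * r * \<alpha>" using r a0 by simp
  have t2: "0 \<le> 4 * r * (1 - \<alpha>)" using r a1 by simp
  have X1: "op_pow (absop C) (4 * r * \<alpha>) = fc P1 (fpow (\<alpha> * (2 * r)))"
    unfolding absop_def P1_def using op_pow_half[OF posop_AstarA[OF Cb] t1] e1 by simp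
  have Y1: "op_pow (absop (adj B)) (4 * r * (1 - \<alpha>)) = fc R2 (fpow ((1 - \<alpha>) * (2 * r)))"
  proof -
    have "absop (adj B) = op_pow R2 (1/2)" unfolding absop_def R2_def by (simp add: adj_adj[OF Bb])
    then show ?thesis using op_pow_half[OF PR2 t2] e2 by simp
  qed
  have X2: "op_pow (absop B) (4 * r * \<alpha>) = fc P2 (fpow (\<alpha> * (2 * r)))"
    unfolding absop_def P2_def using op_pow_half[OF posop_AstarA[OF Bb] t1] e1 by simp
  have Y2: "op_pow (absop (adj C)) (4 * r * (1 - \<alpha>)) = fc R1 (fpow ((1 - \<alpha>) * (2 * r)))"
  proof -
    have "absop (adj C) = op_pow R1 (1/2)" unfolding absop_def R1_def by (simp add: adj_adj[OF Cb])
    then show ?thesis using op_pow_half[OF PR1 t2] e2 by simp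
  qed
  define M1 where "M1 = onorm (\<lambda>v. fc P1 (fpow (\<alpha> * (2 * r))) v + fc R2 (fpow ((1 - \<alpha>) * (2 * r))) v)"
  define M2 where "M2 = onorm (\<lambda>v. fc P2 (fpow (\<alpha> * (2 * r))) v + fc R1 (fpow ((1 - \<alpha>) * (2 * r))) v)"
  define m where "m = 1/2 * max M1 M2"
  have ca2: "continuous_on {0..} (fpow (\<alpha> * (2 * r)))" by (rule cont_fpow) (use a0 r in simp)
  have cb2: "continuous_on {0..} (fpow ((1 - \<alpha>) * (2 * r)))" by (rule cont_fpow) (use a1 r in simp)
  have M10: "0 \<le> M1" unfolding M1_def by (rule bcl_onorm_nonneg[OF bcl_add[OF fc_bcl[OF PP1 ca2] fc_bcl[OF PR2 cb2]]])
  have M20: "0 \<le> M2" unfolding M2_def by (rule bcl_onorm_nonneg[OF bcl_add[OF fc_bcl[OF PP2 ca2] fc_bcl[OF PR1 cb2]]])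
  have m0: "0 \<le> m" using M10 M20 by (simp add: m_def)
  define b where "b = m powr (1 / (2 * r))"
  have b0: "0 \<le> b" by (simp add: b_def)
  have M1b: "(M1 / 2) powr (1 / (2 * r)) \<le> b" unfolding b_def m_def
    by (rule powr_mono2) (use M10 r in auto)
  have M2b: "(M2 / 2) powr (1 / (2 * r)) \<le> b" unfolding b_def m_def
    by (rule powr_mono2) (use M20 r in auto)
  define T where "T = (\<lambda>(x, y). (B y, C x))"
  have bound: "cmod (cinner (T w) w) \<le> b" if w: "norm w = 1" for w :: "'a \<times> 'b"
  proof -
    obtain x1 x2 where wx: "w = (x1, x2)" by (cases w)
    have nn: "(norm x1)\<^sup>2 + (norm x2)\<^sup>2 = 1"
      using w by (simp add: wx norm_prod_def)
    have inner: "cinner (T w) w = cinner (B x2) x1 + cinner (C x1) x2"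
      by (simp add: T_def wx cinner_prod_def)
    define u1 where "u1 = Re (cinner (fc P1 (fpow \<alpha>) x1) x1)"
    define v1 where "v1 = Re (cinner (fc R2 (fpow (1 - \<alpha>)) x1) x1)"
    define u2 where "u2 = Re (cinner (fc P2 (fpow \<alpha>) x2) x2)"
    define v2 where "v2 = Re (cinner (fc R1 (fpow (1 - \<alpha>)) x2) x2)"
    have ca: "continuous_on {0..} (fpow \<alpha>)" by (rule cont_fpow[OF a0])
    have cb: "continuous_on {0..} (fpow (1 - \<alpha>))" by (rule cont_fpow) (use a1 in simp)
    have u10: "0 \<le> u1" unfolding u1_def by (rule fc_pos[OF PP1 ca fpow_nonneg])
    have v10: "0 \<le> v1" unfolding v1_def by (rule fc_pos[OF PR2 cb fpow_nonneg])
    have u20: "0 \<le> u2" unfolding u2_def by (rule fc_pos[OF PP2 ca fpow_nonneg])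
    have v20: "0 \<le> v2" unfolding v2_def by (rule fc_pos[OF PR1 cb fpow_nonneg])
    have sC: "cmod (cinner (C x1) x2) \<le> (u1 + v2) / 2"
    proof (rule amgm_bound)
      show "(cmod (cinner (C x1) x2))\<^sup>2 \<le> u1 * v2"
        unfolding u1_def v2_def P1_def R1_def by (rule mixed_schwarz[OF Cb a0 a1])
    qed (simp_all add: u10 v20)
    have sB: "cmod (cinner (B x2) x1) \<le> (u2 + v1) / 2"
    proof (rule amgm_bound)
      show "(cmod (cinner (B x2) x1))\<^sup>2 \<le> u2 * v1"
        unfolding u2_def v1_def P2_def R2_def by (rule mixed_schwarz[OF Bb a0 a1])
    qed (simp_all add: u20 v10)
    have h1: "(u1 + v1) / 2 \<le> (norm x1)\<^sup>2 * (M1 / 2) powr (1 / (2 * r))"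
      unfolding u1_def v1_def M1_def by (rule half_bound[OF PP1 PR2 a0 a1 r])
    have h2: "(u2 + v2) / 2 \<le> (norm x2)\<^sup>2 * (M2 / 2) powr (1 / (2 * r))"
      unfolding u2_def v2_def M2_def by (rule half_bound[OF PP2 PR1 a0 a1 r])
    have "cmod (cinner (T w) w) \<le> cmod (cinner (B x2) x1) + cmod (cinner (C x1) x2)"
      unfolding inner by (rule norm_triangle_ineq)
    also have "\<dots> \<le> (u2 + v1) / 2 + (u1 + v2) / 2" by (rule add_mono[OF sB sC])
    also have "\<dots> = (u1 + v1) / 2 + (u2 + v2) / 2" by (simp add: field_simps)
    also have "\<dots> \<le> (norm x1)\<^sup>2 * (M1 / 2) powr (1 / (2 * r)) + (norm x2)\<^sup>2 * (M2 / 2) powr (1 / (2 * r))"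
      by (rule add_mono[OF h1 h2])
    also have "\<dots> \<le> (norm x1)\<^sup>2 * b + (norm x2)\<^sup>2 * b"
      by (intro add_mono mult_left_mono M1b M2b) simp_all
    also have "\<dots> = ((norm x1)\<^sup>2 + (norm x2)\<^sup>2) * b" by (simp only: distrib_right)
    also have "\<dots> = b" using nn by simp
    finally show ?thesis .
  qed
  define S where "S = {0} \<union> {cmod (cinner (T x) x) | x. norm x = 1}"
  have Sb: "\<And>s. s \<in> S \<Longrightarrow> s \<le> b" unfolding S_def using bound b0 by auto
  have nr: "nrad T = Sup S" unfolding nrad_def S_def ..
  have n1: "nrad T \<le> b" unfolding nr by (rule cSup_least) (auto simp: S_def Sb)
  have bddS: "bdd_above S" by (rule bdd_aboveI[of _ b]) (rule Sb)
  have n0: "0 \<le> nrad T" unfolding nr by (rule cSup_upper[OF _ bddS]) (simp add: S_def)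
  have "nrad T powr (2 * r) \<le> b powr (2 * r)" by (rule powr_mono2) (use n0 n1 r in auto)
  also have "b powr (2 * r) = m" unfolding b_def using m0 r by (simp add: powr_powr)
  finally show ?thesis unfolding T_def m_def M1_def M2_def X1 Y1 X2 Y2 .
qed


end
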